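(* In the setting below, assume that $U$ has the Tsirelson property: there is $C>0$ such that for every $n\in\mathbb N$, every normalized block sequence $(v_j)_{j=1}^n$ of $(u_i)$ with $n\le\min\mathrm{Supp}(v_1)$ is $C$-equivalent to the unit vector basis of $\ell_1^n$. Then $Y$ is asymptotic-$c_0$.
   Context: Setting: $X$ is a separable Banach space, $(x_n)$ a sequence in $S_X$ with $\{\pm x_n\}$ dense in $S_X$; $U$ is a Banach space with a normalized $1$-unconditional boundedly complete basis $(u_n)$. For finite $I,J\subseteq\mathbb N$, $I<J$ means $\max I<\min J$. $Z$ is the completion of $c_{00}$ (unit vectors $(e_i)$) under $\|a\|_Z=\max\{\|\sum_{j=1}^k\|\sum_{i\in I_j}a_ix_i\|_Xu_{\min I_j}\|_U: k\in\mathbb N,\ I_1<\dots<I_k\text{ intervals}\}$. $(e_j^* )$ are the coordinate functionals of the basis $(e_j)$ of $Z$ and $Y=\overline{\mathrm{span}}\{e_j^*\}\subseteq Z^*$. Asymptotic-$c_0$: there is $C'\ge1$ such that for every $k$: there is a closed finite-codimensional subspace $Y_1$ such that for all $y_1\in S_{Y_1}$ there is a closed finite-codimensional $Y_2$ ... such that for all $y_k\in S_{Y_k}$, $\|\sum_{i=1}^ka_iy_i\|\le C'\max_i|a_i|$ for all $(a_i)\in\mathbb R^k$. *)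

theory Defs
  imports "HOL-Analysis.Analysis"
begin

definition schauder_basis :: "(nat \<Rightarrow> 'b::real_normed_vector) \<Rightarrow> bool" where
  "schauder_basis u \<longleftrightarrow> (\<forall>y. \<exists>!a. (\<lambda>n. a n *\<^sub>R u n) sums y)"

definition coord :: "(nat \<Rightarrow> 'b::real_normed_vector) \<Rightarrow> 'b \<Rightarrow> nat \<Rightarrow> real" where
  "coord u y = (THE a. (\<lambda>n. a n *\<^sub>R u n) sums y)"

definition supp :: "(nat \<Rightarrow> 'b::real_normed_vector) \<Rightarrow> 'b \<Rightarrow> nat set" where
  "supp u y = {i. coord u y i \<noteq> 0}"

definition unconditional1 :: "(nat \<Rightarrow> 'b::real_normed_vector) \<Rightarrow> bool" where
  "unconditional1 u \<longleftrightarrow> (\<forall>a \<epsilon> n. (\<forall>i. \<epsilon> i \<in> {-1, 1}) \<longrightarrow>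
      norm (\<Sum>i<n. (\<epsilon> i * a i) *\<^sub>R u i) = norm (\<Sum>i<n. a i *\<^sub>R u i))"

definition boundedly_complete :: "(nat \<Rightarrow> 'b::real_normed_vector) \<Rightarrow> bool" where
  "boundedly_complete u \<longleftrightarrow> (\<forall>a. (\<exists>M. \<forall>n. norm (\<Sum>i<n. a i *\<^sub>R u i) \<le> M)
      \<longrightarrow> summable (\<lambda>i. a i *\<^sub>R u i))"

text \<open>The paper indexes the basis from 1; here u is indexed from 0,
  so u i here is u_(i+1) of the paper, and "n \<le> min Supp(v_1)" becomes
  "n \<le> min supp + 1".\<close>
definition tsirelson :: "(nat \<Rightarrow> 'b::real_normed_vector) \<Rightarrow> bool" where
  "tsirelson u \<longleftrightarrow> (\<exists>C>0. \<forall>n v.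
     (\<forall>j\<in>{1..n}. norm (v j) = 1 \<and> finite (supp u (v j)) \<and> supp u (v j) \<noteq> {})
     \<and> (\<forall>j. 1 \<le> j \<and> j < n \<longrightarrow> Max (supp u (v j)) < Min (supp u (v (Suc j))))
     \<and> n \<le> Min (supp u (v 1)) + 1
     \<longrightarrow> (\<forall>a. (1 / C) * (\<Sum>j=1..n. \<bar>a j\<bar>) \<le> norm (\<Sum>j=1..n. a j *\<^sub>R v j)
              \<and> norm (\<Sum>j=1..n. a j *\<^sub>R v j) \<le> C * (\<Sum>j=1..n. \<bar>a j\<bar>)))"

section \<open>The space Z (norm on c00) and Y = closed span of the coordinate functionals in Z*\<close>

definition Znorm :: "(nat \<Rightarrow> 'a::real_normed_vector) \<Rightarrow> (nat \<Rightarrow> 'b::real_normed_vector)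
    \<Rightarrow> (nat \<Rightarrow> real) \<Rightarrow> real" where
  "Znorm x u a = Sup {norm (\<Sum>j<k. norm (\<Sum>i\<in>{p j..q j}. a i *\<^sub>R x i) *\<^sub>R u (p j)) | k p q.
      1 \<le> k \<and> (\<forall>j<k. p j \<le> q j) \<and> (\<forall>j. Suc j < k \<longrightarrow> q j < p (Suc j))}"

text \<open>Values of the functional with coefficient sequence b on the unit ball of c00
  (w.r.t. the Z-norm); the dual norm is their supremum.\<close>
definition dual_set :: "(nat \<Rightarrow> 'a::real_normed_vector) \<Rightarrow> (nat \<Rightarrow> 'b::real_normed_vector)
    \<Rightarrow> (nat \<Rightarrow> real) \<Rightarrow> real set" where
  "dual_set x u b = {\<bar>\<Sum>i<n. a i * b i\<bar> | a n. (\<forall>i\<ge>n. a i = 0) \<and> Znorm x u a \<le> 1}"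

definition dualnorm :: "(nat \<Rightarrow> 'a::real_normed_vector) \<Rightarrow> (nat \<Rightarrow> 'b::real_normed_vector)
    \<Rightarrow> (nat \<Rightarrow> real) \<Rightarrow> real" where
  "dualnorm x u b = Sup (dual_set x u b)"

definition Yspace :: "(nat \<Rightarrow> 'a::real_normed_vector) \<Rightarrow> (nat \<Rightarrow> 'b::real_normed_vector)
    \<Rightarrow> (nat \<Rightarrow> real) set" where
  "Yspace x u = {b. \<forall>\<epsilon>>0. \<exists>c m. (\<forall>i\<ge>m. c i = 0)
      \<and> bdd_above (dual_set x u (\<lambda>i. b i - c i)) \<and> dualnorm x u (\<lambda>i. b i - c i) < \<epsilon>}"

definition closed_fincodim :: "(nat \<Rightarrow> real) set \<Rightarrow> ((nat \<Rightarrow> real) \<Rightarrow> real)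
    \<Rightarrow> (nat \<Rightarrow> real) set \<Rightarrow> bool" where
  "closed_fincodim V N W \<longleftrightarrow> W \<subseteq> V \<and> (\<lambda>i. 0) \<in> W
    \<and> (\<forall>w1\<in>W. \<forall>w2\<in>W. (\<lambda>i. w1 i + w2 i) \<in> W)
    \<and> (\<forall>c. \<forall>w\<in>W. (\<lambda>i. c * w i) \<in> W)
    \<and> (\<forall>s y. (\<forall>n. s n \<in> W) \<and> y \<in> V \<and> (\<lambda>n. N (\<lambda>i. s n i - y i)) \<longlonglongrightarrow> 0 \<longrightarrow> y \<in> W)
    \<and> (\<exists>S. finite S \<and> S \<subseteq> V \<and>
         (\<forall>v\<in>V. \<exists>w\<in>W. \<exists>c. v = (\<lambda>i. w i + (\<Sum>s\<in>S. c s * s i))))"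

fun asym_game :: "(nat \<Rightarrow> real) set \<Rightarrow> ((nat \<Rightarrow> real) \<Rightarrow> real) \<Rightarrow> real \<Rightarrow> nat
    \<Rightarrow> (nat \<Rightarrow> real) list \<Rightarrow> bool" where
  "asym_game V N C 0 ys = (\<forall>a. N (\<lambda>i. \<Sum>j<length ys. a j * (ys ! j) i)
        \<le> C * (MAX j\<in>{..<length ys}. \<bar>a j\<bar>))"
| "asym_game V N C (Suc m) ys = (\<exists>W. closed_fincodim V N W \<and>
        (\<forall>y\<in>W. N y = 1 \<longrightarrow> asym_game V N C m (ys @ [y])))"

definition asymptotic_c0 :: "(nat \<Rightarrow> real) set \<Rightarrow> ((nat \<Rightarrow> real) \<Rightarrow> real) \<Rightarrow> bool" where
  "asymptotic_c0 V N \<longleftrightarrow> (\<exists>C\<ge>1. \<forall>k\<ge>1. asym_game V N C k [])"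

end

theory Submission
  imports Defs
begin


definition cz :: "(nat \<Rightarrow> 'a::real_normed_vector) \<Rightarrow> (nat \<Rightarrow> real) \<Rightarrow> nat \<times> nat \<Rightarrow> real" where
  "cz x z t = norm (\<Sum>i\<in>{fst t..snd t}. z i *\<^sub>R x i)"

definition Zval :: "(nat \<Rightarrow> 'a::real_normed_vector) \<Rightarrow> (nat \<Rightarrow> 'b::real_normed_vector)
   \<Rightarrow> (nat \<Rightarrow> real) \<Rightarrow> (nat \<times> nat) set \<Rightarrow> real" where
  "Zval x u z F = norm (\<Sum>t\<in>F. cz x z t *\<^sub>R u (fst t))"

definition good :: "(nat \<times> nat) set \<Rightarrow> bool" where
  "good F \<longleftrightarrow> finite F \<and> (\<forall>t\<in>F. fst t \<le> snd t) \<and>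
     (\<forall>t\<in>F. \<forall>t'\<in>F. t \<noteq> t' \<longrightarrow> snd t < fst t' \<or> snd t' < fst t)"

definition ZS :: "(nat \<Rightarrow> 'a::real_normed_vector) \<Rightarrow> (nat \<Rightarrow> 'b::real_normed_vector)
    \<Rightarrow> (nat \<Rightarrow> real) \<Rightarrow> real set" where
  "ZS x u a = {norm (\<Sum>j<k. norm (\<Sum>i\<in>{p j..q j}. a i *\<^sub>R x i) *\<^sub>R u (p j)) | k p q.
      1 \<le> k \<and> (\<forall>j<k. p j \<le> q j) \<and> (\<forall>j. Suc j < k \<longrightarrow> q j < p (Suc j))}"

lemma Znorm_ZS: "Znorm x u a = Sup (ZS x u a)"
  unfolding Znorm_def ZS_def by simp

lemma good_inj_fst: "good F \<Longrightarrow> inj_on fst F"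
  unfolding good_def inj_on_def by (metis le_trans not_le prod.expand)

lemma chain_lt:
  assumes "\<forall>j<k. (p::nat\<Rightarrow>nat) j \<le> q j" "\<forall>j. Suc j < k \<longrightarrow> q j < p (Suc j)"
  shows "j + Suc d < k \<Longrightarrow> q j < p (j + Suc d)"
proof (induction d)
  case 0 then show ?case using assms by auto
next
  case (Suc d)
  then have "q j < p (j + Suc d)" by simp
  also have "p (j + Suc d) \<le> q (j + Suc d)" using assms Suc.prems by auto
  also have "q (j + Suc d) < p (Suc (j + Suc d))" using assms Suc.prems by auto
  finally show ?case by simp
qed

lemma ZS_elem_good:
  assumes "\<forall>j<k. (p::nat\<Rightarrow>nat) j \<le> q j" "\<forall>j. Suc j < k \<longrightarrow> q j < p (Suc j)"
  shows "good ((\<lambda>j. (p j, q j)) ` {..<k}) \<and>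
    norm (\<Sum>j<k. norm (\<Sum>i\<in>{p j..q j}. a i *\<^sub>R x i) *\<^sub>R u (p j)) = Zval x u a ((\<lambda>j. (p j, q j)) ` {..<k})"
proof -
  have lt: "q j < p j'" if "j < j'" "j' < k" for j j'
  proof -
    obtain d where "j' = j + Suc d" using \<open>j < j'\<close> less_iff_Suc_add by auto
    then show ?thesis using chain_lt[OF assms] that by auto
  qed
  have inj: "inj_on (\<lambda>j. (p j, q j)) {..<k}"
  proof (rule inj_onI)
    fix j j' assume "j \<in> {..<k}" "j' \<in> {..<k}" "(p j, q j) = (p j', q j')"
    show "j = j'"
    proof (rule ccontr)
      assume "j \<noteq> j'"
      then consider "j < j'" | "j' < j" by linarith
      then show False
      proof cases
        case 1 then show False using lt[OF 1] \<open>j' \<in> {..<k}\<close> \<open>(p j, q j) = (p j', q j')\<close> assms(1)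
          by (metis lessThan_iff not_le prod.inject)
      next
        case 2 then show False using lt[OF 2] \<open>j \<in> {..<k}\<close> \<open>(p j, q j) = (p j', q j')\<close> assms(1)
          by (metis lessThan_iff not_le prod.inject)
      qed
    qed
  qed
  have g: "good ((\<lambda>j. (p j, q j)) ` {..<k})"
    unfolding good_def using assms(1) lt
    by (auto, metis linorder_neqE_nat)+
  show ?thesis using g
    by (simp add: Zval_def cz_def sum.reindex[OF inj])
qed


lemma good_q_unique: "good F \<Longrightarrow> (i,b) \<in> F \<Longrightarrow> (i,b') \<in> F \<Longrightarrow> b = b'"
proof -
  assume g: "good F" and a: "(i,b) \<in> F" and b: "(i,b') \<in> F"
  have "(i,b) = (i,b')" using inj_onD[OF good_inj_fst[OF g] _ a b] by simp
  then show "b = b'" by simp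
qed

lemma Zval_in_ZS:
  assumes g: "good F" and ne: "F \<noteq> {}"
  shows "Zval x u z F \<in> ZS x u z"
proof -
  define P where "P = fst ` F"
  define qf where "qf i = (THE b. (i,b) \<in> F)" for i
  have qfF: "(i, qf i) \<in> F" if "i \<in> P" for i
  proof -
    from \<open>i \<in> P\<close> obtain b where b: "(i,b) \<in> F" unfolding P_def by force
    have "qf i = b" unfolding qf_def using good_q_unique[OF g b] b by blast
    then show ?thesis using b by simp
  qed
  have Feq: "F = (\<lambda>i. (i, qf i)) ` P"
  proof
    show "F \<subseteq> (\<lambda>i. (i, qf i)) ` P"
    proof
      fix t assume t: "t \<in> F"
      then have "fst t \<in> P" unfolding P_def by simp
      have "(fst t, snd t) \<in> F" using t by simp
      then have "snd t = qf (fst t)" using good_q_unique[OF g _ qfF[OF \<open>fst t \<in> P\<close>]] by blast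
      then have "t = (\<lambda>i. (i, qf i)) (fst t)" by (simp add: prod_eq_iff)
      then show "t \<in> (\<lambda>i. (i, qf i)) ` P" using \<open>fst t \<in> P\<close> by (rule image_eqI)
    qed
    show "(\<lambda>i. (i, qf i)) ` P \<subseteq> F" using qfF by auto
  qed
  have finP: "finite P" using g unfolding good_def P_def by simp
  define L where "L = sorted_list_of_set P"
  define k where "k = length L"
  define p where "p j = L ! j" for j
  define q where "q j = qf (p j)" for j
  have setL: "set L = P" "distinct L" using finP unfolding L_def by auto
  have sw: "sorted_wrt (<) L" unfolding L_def by (rule strict_sorted_list_of_set)
  have pin: "p j \<in> P" if "j < k" for j using that setL unfolding p_def k_def by auto
  have k1: "1 \<le> k" using ne setL unfolding k_def P_def by (cases L) auto
  have gF: "\<And>t. t \<in> F \<Longrightarrow> fst t \<le> snd t" using g unfolding good_def by blast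
  have gD: "\<And>t t'. t \<in> F \<Longrightarrow> t' \<in> F \<Longrightarrow> t \<noteq> t' \<Longrightarrow> snd t < fst t' \<or> snd t' < fst t"
    using g unfolding good_def by blast
  have pq: "\<forall>j<k. p j \<le> q j"
  proof (intro allI impI)
    fix j assume "j < k"
    then have "(p j, q j) \<in> F" using qfF pin unfolding q_def by blast
    then show "p j \<le> q j" using gF by fastforce
  qed
  have sep: "\<forall>j. Suc j < k \<longrightarrow> q j < p (Suc j)"
  proof (intro allI impI)
    fix j assume j: "Suc j < k"
    have lt: "p j < p (Suc j)" using sorted_wrt_nth_less[OF sw, of j "Suc j"] j unfolding p_def k_def by simp
    have "(p j, q j) \<in> F" "(p (Suc j), q (Suc j)) \<in> F" using qfF pin j unfolding q_def by auto
    moreover have "(p j, q j) \<noteq> (p (Suc j), q (Suc j))" using lt by simp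
    ultimately have "q j < p (Suc j) \<or> q (Suc j) < p j" using gD by fastforce
    moreover have "p (Suc j) \<le> q (Suc j)" using pq j by simp
    ultimately show "q j < p (Suc j)" using lt by linarith
  qed
  have inj1: "inj_on (\<lambda>i. (i, qf i)) P" by (rule inj_onI) simp
  have injL: "inj_on p {..<k}" unfolding p_def k_def using setL(2) by (intro inj_on_nth) auto
  have imL: "p ` {..<k} = P" unfolding p_def k_def using setL(1) nth_image[of "length L" L]
    by (simp add: atLeast0LessThan)
  have "Zval x u z F = norm (\<Sum>i\<in>P. cz x z (i, qf i) *\<^sub>R u i)"
    unfolding Zval_def Feq by (simp add: sum.reindex[OF inj1])
  also have "(\<Sum>i\<in>P. cz x z (i, qf i) *\<^sub>R u i) = (\<Sum>j<k. cz x z (p j, q j) *\<^sub>R u (p j))"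
    unfolding imL[symmetric] q_def by (simp add: sum.reindex[OF injL])
  finally have "Zval x u z F = norm (\<Sum>j<k. norm (\<Sum>i\<in>{p j..q j}. z i *\<^sub>R x i) *\<^sub>R u (p j))"
    by (simp add: cz_def)
  then show ?thesis unfolding ZS_def using k1 pq sep by blast
qed

lemma ZS_elem:
  assumes "s \<in> ZS x u z"
  obtains F where "good F" "F \<noteq> {}" "s = Zval x u z F"
proof -
  obtain k p q where s: "s = norm (\<Sum>j<k. norm (\<Sum>i\<in>{p j..q j}. z i *\<^sub>R x i) *\<^sub>R u (p j))"
    and k: "1 \<le> k" "\<forall>j<k. p j \<le> q j" "\<forall>j. Suc j < k \<longrightarrow> q j < p (Suc j)"
    using assms unfolding ZS_def by blast
  have "(\<lambda>j. (p j, q j)) ` {..<k} \<noteq> {}" using k(1) by (auto simp: lessThan_empty_iff)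
  moreover note ZS_elem_good[OF k(2,3), of z x u]
  ultimately show ?thesis using that[of "(\<lambda>j. (p j, q j)) ` {..<k}"] s by simp
qed


lemma ZS_nonneg: "s \<in> ZS x u z \<Longrightarrow> 0 \<le> s"
  unfolding ZS_def by auto

lemma ZS_ne: "ZS x u z \<noteq> {}"
proof -
  have "good {(0,0)}" unfolding good_def by simp
  from Zval_in_ZS[OF this] show ?thesis by blast
qed

context
  fixes x :: "nat \<Rightarrow> 'a::real_normed_vector" and u :: "nat \<Rightarrow> 'b::real_normed_vector"
  assumes nx: "\<forall>n. norm (x n) = 1" and nu: "\<forall>n. norm (u n) = 1"
begin

lemma cz_nonneg: "0 \<le> cz x z t" unfolding cz_def by simp

lemma cz_le: "cz x z t \<le> (\<Sum>i\<in>{fst t..snd t}. \<bar>z i\<bar>)"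
proof -
  have "cz x z t \<le> (\<Sum>i\<in>{fst t..snd t}. norm (z i *\<^sub>R x i))" unfolding cz_def by (rule norm_sum)
  also have "\<dots> = (\<Sum>i\<in>{fst t..snd t}. \<bar>z i\<bar>)" using nx by simp
  finally show ?thesis .
qed

lemma Zval_le_sum: "finite F \<Longrightarrow> Zval x u z F \<le> (\<Sum>t\<in>F. cz x z t)"
proof -
  assume "finite F"
  have "Zval x u z F \<le> (\<Sum>t\<in>F. norm (cz x z t *\<^sub>R u (fst t)))" unfolding Zval_def by (rule norm_sum)
  also have "\<dots> = (\<Sum>t\<in>F. cz x z t)" using nu cz_nonneg by simp
  finally show ?thesis .
qed

lemma Zval_bound:
  assumes g: "good F" and fs: "\<forall>i\<ge>N. z i = 0"
  shows "Zval x u z F \<le> (\<Sum>i<N. \<bar>z i\<bar>)"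
proof -
  have fin: "finite F" using g unfolding good_def by simp
  have "Zval x u z F \<le> (\<Sum>t\<in>F. cz x z t)" by (rule Zval_le_sum[OF fin])
  also have "\<dots> \<le> (\<Sum>t\<in>F. \<Sum>i\<in>{fst t..snd t}. \<bar>z i\<bar>)" by (intro sum_mono cz_le)
  also have "\<dots> = (\<Sum>i\<in>(\<Union>t\<in>F. {fst t..snd t}). \<bar>z i\<bar>)"
  proof (rule sum.UNION_disjoint[symmetric])
    show "finite F" by (rule fin)
    show "\<forall>t\<in>F. finite {fst t..snd t}" by simp
    show "\<forall>t\<in>F. \<forall>t'\<in>F. t \<noteq> t' \<longrightarrow> {fst t..snd t} \<inter> {fst t'..snd t'} = {}"
      using g unfolding good_def by fastforce
  qed
  also have "\<dots> \<le> (\<Sum>i\<in>(\<Union>t\<in>F. {fst t..snd t}) \<union> {..<N}. \<bar>z i\<bar>)"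
    by (rule sum_mono2) (use fin in auto)
  also have "\<dots> = (\<Sum>i<N. \<bar>z i\<bar>)"
    by (rule sum.mono_neutral_right) (use fin fs in auto)
  finally show ?thesis .
qed

lemma ZS_bdd: "\<forall>i\<ge>N. z i = 0 \<Longrightarrow> bdd_above (ZS x u z)"
  by (rule bdd_aboveI[of _ "\<Sum>i<N. \<bar>z i\<bar>"]) (metis ZS_elem Zval_bound)

lemma Znorm_nonneg: "\<forall>i\<ge>N. z i = 0 \<Longrightarrow> 0 \<le> Znorm x u z"
proof -
  assume fs: "\<forall>i\<ge>N. z i = 0"
  obtain s where s: "s \<in> ZS x u z" using ZS_ne by blast
  have "0 \<le> s" using ZS_nonneg[OF s] .
  also have "s \<le> Znorm x u z" unfolding Znorm_ZS by (rule cSup_upper[OF s ZS_bdd[OF fs]])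
  finally show ?thesis .
qed

lemma Zval_le_Znorm:
  assumes g: "good F" and fs: "\<forall>i\<ge>N. z i = 0"
  shows "Zval x u z F \<le> Znorm x u z"
proof (cases "F = {}")
  case True then show ?thesis using Znorm_nonneg[OF fs] by (simp add: Zval_def)
next
  case False
  show ?thesis unfolding Znorm_ZS by (rule cSup_upper[OF Zval_in_ZS[OF g False] ZS_bdd[OF fs]])
qed

lemma Znorm_le_sum: "\<forall>i\<ge>N. z i = 0 \<Longrightarrow> Znorm x u z \<le> (\<Sum>i<N. \<bar>z i\<bar>)"
  unfolding Znorm_ZS by (rule cSup_least[OF ZS_ne]) (metis ZS_elem Zval_bound)

lemma abs_le_Znorm:
  assumes fs: "\<forall>i\<ge>N. z i = 0"
  shows "\<bar>z i\<bar> \<le> Znorm x u z"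
proof -
  have g: "good {(i,i)}" unfolding good_def by simp
  have "Zval x u z {(i,i)} = \<bar>z i\<bar>" unfolding Zval_def cz_def using nx nu by simp
  then show ?thesis using Zval_le_Znorm[OF g fs] by simp
qed

end




lemma proj_idx:
  fixes u :: "nat \<Rightarrow> 'b::real_normed_vector"
  assumes unc: "unconditional1 u" and fin: "finite A" and BA: "B \<subseteq> A"
  shows "norm (\<Sum>i\<in>B. \<beta> i *\<^sub>R u i) \<le> norm (\<Sum>i\<in>A. \<beta> i *\<^sub>R u i)"
proof -
  obtain n where An: "A \<subseteq> {..<n}" using finite_nat_bounded[OF fin] by blast
  define a where "a i = (if i \<in> A then \<beta> i else 0)" for i
  define \<epsilon> where "\<epsilon> i = (if i \<in> B then 1 else -1::real)" for i
  have eps: "\<forall>i. \<epsilon> i \<in> {-1, 1}" unfolding \<epsilon>_def by simp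
  have gen: "(\<Sum>i<n. (c i * a i) *\<^sub>R u i) = (\<Sum>i\<in>A. (c i * \<beta> i) *\<^sub>R u i)" for c
  proof -
    have "(\<Sum>i<n. (c i * a i) *\<^sub>R u i) = (\<Sum>i<n. if i \<in> A then (c i * \<beta> i) *\<^sub>R u i else 0)"
      unfolding a_def by (rule sum.cong) auto
    also have "\<dots> = (\<Sum>i\<in>{..<n} \<inter> A. (c i * \<beta> i) *\<^sub>R u i)" by (simp add: sum.inter_restrict)
    also have "{..<n} \<inter> A = A" using An by blast
    finally show ?thesis .
  qed
  have S1: "(\<Sum>i<n. a i *\<^sub>R u i) = (\<Sum>i\<in>A. \<beta> i *\<^sub>R u i)" using gen[of "\<lambda>_. 1"] by simp
  have S2: "(\<Sum>i<n. (\<epsilon> i * a i) *\<^sub>R u i) = (\<Sum>i\<in>B. \<beta> i *\<^sub>R u i) - (\<Sum>i\<in>A - B. \<beta> i *\<^sub>R u i)"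
  proof -
    have "(\<Sum>i<n. (\<epsilon> i * a i) *\<^sub>R u i) = (\<Sum>i\<in>A. (\<epsilon> i * \<beta> i) *\<^sub>R u i)" by (rule gen)
    also have "\<dots> = (\<Sum>i\<in>A - B. (\<epsilon> i * \<beta> i) *\<^sub>R u i) + (\<Sum>i\<in>B. (\<epsilon> i * \<beta> i) *\<^sub>R u i)"
      by (rule sum.subset_diff[OF BA fin])
    also have "(\<Sum>i\<in>A - B. (\<epsilon> i * \<beta> i) *\<^sub>R u i) = - (\<Sum>i\<in>A - B. \<beta> i *\<^sub>R u i)"
      unfolding \<epsilon>_def by (simp add: sum_negf[symmetric])
    also have "(\<Sum>i\<in>B. (\<epsilon> i * \<beta> i) *\<^sub>R u i) = (\<Sum>i\<in>B. \<beta> i *\<^sub>R u i)"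
      unfolding \<epsilon>_def by (rule sum.cong) auto
    finally show ?thesis by simp
  qed
  have S3: "(\<Sum>i\<in>A. \<beta> i *\<^sub>R u i) = (\<Sum>i\<in>A - B. \<beta> i *\<^sub>R u i) + (\<Sum>i\<in>B. \<beta> i *\<^sub>R u i)"
    by (rule sum.subset_diff[OF BA fin])
  have eqn: "norm (\<Sum>i<n. (\<epsilon> i * a i) *\<^sub>R u i) = norm (\<Sum>i<n. a i *\<^sub>R u i)"
    using unc eps unfolding unconditional1_def by blast
  have "(\<Sum>i\<in>B. \<beta> i *\<^sub>R u i) = (1/2) *\<^sub>R ((\<Sum>i<n. a i *\<^sub>R u i) + (\<Sum>i<n. (\<epsilon> i * a i) *\<^sub>R u i))"
    unfolding S1 S2 S3 by (simp add: algebra_simps flip: scaleR_add_left)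
  then have "norm (\<Sum>i\<in>B. \<beta> i *\<^sub>R u i) \<le> (1/2) * (norm (\<Sum>i<n. a i *\<^sub>R u i) + norm (\<Sum>i<n. (\<epsilon> i * a i) *\<^sub>R u i))"
    by (simp add: norm_triangle_ineq)
  also have "\<dots> = norm (\<Sum>i\<in>A. \<beta> i *\<^sub>R u i)" unfolding eqn S1 by simp
  finally show ?thesis .
qed

lemma proj_pair:
  fixes u :: "nat \<Rightarrow> 'b::real_normed_vector"
  assumes unc: "unconditional1 u" and fin: "finite H" and inj: "inj_on fst H" and sub: "H' \<subseteq> H"
  shows "norm (\<Sum>t\<in>H'. \<gamma> t *\<^sub>R u (fst t)) \<le> norm (\<Sum>t\<in>H. \<gamma> t *\<^sub>R u (fst t))"
proof -
  define \<beta> where "\<beta> i = \<gamma> (inv_into H fst i)" for i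
  have inj': "inj_on fst H'" using inj sub by (rule inj_on_subset)
  have r: "(\<Sum>t\<in>K. \<gamma> t *\<^sub>R u (fst t)) = (\<Sum>i\<in>fst ` K. \<beta> i *\<^sub>R u i)" if "K \<subseteq> H" "inj_on fst K" for K
  proof -
    have "(\<Sum>i\<in>fst ` K. \<beta> i *\<^sub>R u i) = (\<Sum>t\<in>K. \<beta> (fst t) *\<^sub>R u (fst t))"
      by (simp add: sum.reindex[OF that(2)])
    also have "\<dots> = (\<Sum>t\<in>K. \<gamma> t *\<^sub>R u (fst t))"
    proof (rule sum.cong)
      fix t assume "t \<in> K"
      then have "t \<in> H" using that by blast
      then have "inv_into H fst (fst t) = t" by (rule inv_into_f_f[OF inj])
      then show "\<beta> (fst t) *\<^sub>R u (fst t) = \<gamma> t *\<^sub>R u (fst t)" unfolding \<beta>_def by simp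
    qed simp
    finally show ?thesis by simp
  qed
  show ?thesis unfolding r[OF sub inj'] r[OF order_refl inj]
    by (rule proj_idx[OF unc]) (use fin sub in auto)
qed

lemma coord_finsum:
  fixes u :: "nat \<Rightarrow> 'b::real_normed_vector"
  assumes sb: "schauder_basis u" and fin: "finite A"
  shows "coord u (\<Sum>i\<in>A. \<beta> i *\<^sub>R u i) = (\<lambda>i. if i \<in> A then \<beta> i else 0)"
proof -
  define a where "a i = (if i \<in> A then \<beta> i else 0)" for i
  have "(\<lambda>n. a n *\<^sub>R u n) sums (\<Sum>n\<in>A. a n *\<^sub>R u n)"
    by (rule sums_finite[OF fin]) (simp add: a_def)
  moreover have "(\<Sum>n\<in>A. a n *\<^sub>R u n) = (\<Sum>i\<in>A. \<beta> i *\<^sub>R u i)" unfolding a_def by simp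
  ultimately have s: "(\<lambda>n. a n *\<^sub>R u n) sums (\<Sum>i\<in>A. \<beta> i *\<^sub>R u i)" by simp
  have "coord u (\<Sum>i\<in>A. \<beta> i *\<^sub>R u i) = a"
    unfolding coord_def by (rule the1_equality) (use sb s in \<open>auto simp: schauder_basis_def\<close>)
  then show ?thesis unfolding a_def by (simp add: fun_eq_iff)
qed

lemma supp_finsum:
  fixes u :: "nat \<Rightarrow> 'b::real_normed_vector"
  assumes sb: "schauder_basis u" and fin: "finite A"
  shows "supp u (\<Sum>i\<in>A. \<beta> i *\<^sub>R u i) = {i\<in>A. \<beta> i \<noteq> 0}"
  unfolding supp_def coord_finsum[OF sb fin] by auto




definition rest :: "nat \<Rightarrow> nat \<Rightarrow> (nat \<Rightarrow> real) \<Rightarrow> nat \<Rightarrow> real" where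
  "rest l r z i = (if l \<le> i \<and> i < r then z i else 0)"

lemma cz_rest: "cz x (rest l r z) t = norm (\<Sum>i\<in>{fst t..snd t} \<inter> {l..<r}. z i *\<^sub>R x i)"
proof -
  have "(\<Sum>i\<in>{fst t..snd t}. rest l r z i *\<^sub>R x i) = (\<Sum>i\<in>{fst t..snd t}. if i \<in> {l..<r} then z i *\<^sub>R x i else 0)"
    unfolding rest_def by (rule sum.cong) auto
  also have "\<dots> = (\<Sum>i\<in>{fst t..snd t} \<inter> {l..<r}. z i *\<^sub>R x i)" by (simp add: sum.inter_restrict)
  finally show ?thesis unfolding cz_def by simp
qed

lemma cz_rest_inside: "l \<le> fst t \<Longrightarrow> snd t < r \<Longrightarrow> cz x (rest l r z) t = cz x z t"
proof -
  assume a: "l \<le> fst t" "snd t < r"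
  have "{fst t..snd t} \<inter> {l..<r} = {fst t..snd t}" using a by auto
  then show ?thesis unfolding cz_rest by (simp add: cz_def)
qed

lemma restrict_Zval:
  fixes x :: "nat \<Rightarrow> 'a::real_normed_vector" and u :: "nat \<Rightarrow> 'b::real_normed_vector"
  assumes nu: "\<forall>n. norm (u n) = 1" and unc: "unconditional1 u"
    and g: "good F" and lr: "l < r"
  shows "\<exists>F'. good F' \<and> (\<forall>t\<in>F'. l \<le> fst t \<and> snd t < r) \<and>
     Zval x u (rest l r z) F \<le> 2 * Zval x u z F'"
proof -
  have fin: "finite F" and gF: "\<And>t. t \<in> F \<Longrightarrow> fst t \<le> snd t"
    and gD: "\<And>t t'. t \<in> F \<Longrightarrow> t' \<in> F \<Longrightarrow> t \<noteq> t' \<Longrightarrow> snd t < fst t' \<or> snd t' < fst t"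
    using g unfolding good_def by auto
  define G where "G = {t\<in>F. \<exists>i. fst t \<le> i \<and> i \<le> snd t \<and> l \<le> i \<and> i < r}"
  define g where "g t = (max (fst t) l, min (snd t) (r - 1))" for t
  have GF: "G \<subseteq> F" unfolding G_def by blast
  have finG: "finite G" using fin GF by (rule finite_subset[rotated])
  have gle: "fst (g t) \<le> snd (g t)" "l \<le> fst (g t)" "snd (g t) < r" if "t \<in> G" for t
    using that lr unfolding G_def g_def by auto
  have int: "{fst t..snd t} \<inter> {l..<r} = {fst (g t)..snd (g t)}" if "t \<in> G" for t
    using that lr unfolding G_def g_def by auto
  have czG: "cz x (rest l r z) t = cz x z (g t)" if "t \<in> G" for t
    unfolding cz_rest int[OF that] by (simp add: cz_def)
  have czN: "cz x (rest l r z) t = 0" if "t \<in> F - G" for t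
  proof -
    have "{fst t..snd t} \<inter> {l..<r} = {}" using that unfolding G_def by auto
    then show ?thesis unfolding cz_rest by simp
  qed
  have inj: "inj_on g G"
  proof (rule inj_onI)
    fix t t' assume t: "t \<in> G" and t': "t' \<in> G" and e: "g t = g t'"
    show "t = t'"
    proof (rule ccontr)
      assume ne: "t \<noteq> t'"
      have "snd t < fst t' \<or> snd t' < fst t" using gD[OF _ _ ne] t t' GF by blast
      then show False using t t' e lr unfolding G_def g_def by (auto simp: max_def min_def split: if_splits)
    qed
  qed
  have goodG: "good (g ` G)"
    unfolding good_def
  proof (intro conjI ballI impI)
    show "finite (g ` G)" using finG by simp
  next
    fix s assume "s \<in> g ` G" then show "fst s \<le> snd s" using gle by auto
  next
    fix s s' assume s: "s \<in> g ` G" and s': "s' \<in> g ` G" and ne: "s \<noteq> s'"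
    obtain t where t: "t \<in> G" "s = g t" using s by blast
    obtain t' where t': "t' \<in> G" "s' = g t'" using s' by blast
    have "t \<noteq> t'" using ne t t' by blast
    then have "snd t < fst t' \<or> snd t' < fst t" using gD t t' GF by blast
    then show "snd s < fst s' \<or> snd s' < fst s" using t t' unfolding g_def by auto
  qed
  have inside: "\<forall>s\<in>g ` G. l \<le> fst s \<and> snd s < r" using gle by auto
  have L: "Zval x u (rest l r z) F = norm (\<Sum>t\<in>G. cz x z (g t) *\<^sub>R u (fst t))"
  proof -
    have "(\<Sum>t\<in>F. cz x (rest l r z) t *\<^sub>R u (fst t)) = (\<Sum>t\<in>G. cz x (rest l r z) t *\<^sub>R u (fst t))"
      by (rule sum.mono_neutral_right[OF fin GF]) (simp add: czN)
    also have "\<dots> = (\<Sum>t\<in>G. cz x z (g t) *\<^sub>R u (fst t))" by (rule sum.cong) (simp_all add: czG)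
    finally show ?thesis unfolding Zval_def by simp
  qed
  have R: "Zval x u z (g ` G) = norm (\<Sum>t\<in>G. cz x z (g t) *\<^sub>R u (fst (g t)))"
    unfolding Zval_def by (simp add: sum.reindex[OF inj])
  have injf: "inj_on fst (g ` G)" by (rule good_inj_fst[OF goodG])
  have Rnn: "0 \<le> Zval x u z (g ` G)" unfolding Zval_def by simp
  show ?thesis
  proof (cases "\<exists>t0\<in>G. fst t0 < l")
    case False
    then have "\<forall>t\<in>G. fst (g t) = fst t" unfolding g_def by auto
    then have "Zval x u (rest l r z) F = Zval x u z (g ` G)" unfolding L R by simp
    then show ?thesis using goodG inside Rnn by (intro exI[of _ "g ` G"]) auto
  next
    case True
    then obtain t0 where t0: "t0 \<in> G" "fst t0 < l" by blast
    have oth: "fst t \<ge> l" if "t \<in> G" "t \<noteq> t0" for t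
    proof (rule ccontr)
      assume "\<not> l \<le> fst t"
      moreover have "snd t < fst t0 \<or> snd t0 < fst t" using gD[OF _ _ that(2)] that(1) t0(1) GF by blast
      ultimately show False using that(1) t0 unfolding G_def by auto
    qed
    have gt0: "fst (g t0) = l" using t0 unfolding g_def by auto
    define A where "A = (\<Sum>t\<in>G - {t0}. cz x z (g t) *\<^sub>R u (fst (g t)))"
    have A': "(\<Sum>t\<in>G - {t0}. cz x z (g t) *\<^sub>R u (fst t)) = A"
      unfolding A_def by (rule sum.cong) (use oth in \<open>auto simp: g_def\<close>)
    define c0 where "c0 = cz x z (g t0)"
    have c0nn: "0 \<le> c0" unfolding c0_def cz_def by simp
    have Ls: "(\<Sum>t\<in>G. cz x z (g t) *\<^sub>R u (fst t)) = c0 *\<^sub>R u (fst t0) + A"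
      unfolding c0_def A'[symmetric] by (rule sum.remove[OF finG t0(1)])
    have Rs: "(\<Sum>t\<in>G. cz x z (g t) *\<^sub>R u (fst (g t))) = c0 *\<^sub>R u l + A"
      unfolding c0_def A_def gt0[symmetric] by (rule sum.remove[OF finG t0(1)])
    have RsH: "(\<Sum>t\<in>G. cz x z (g t) *\<^sub>R u (fst (g t))) = (\<Sum>s\<in>g ` G. cz x z s *\<^sub>R u (fst s))"
      by (simp add: sum.reindex[OF inj])
    have AH: "A = (\<Sum>s\<in>g ` (G - {t0}). cz x z s *\<^sub>R u (fst s))"
      unfolding A_def using inj_on_subset[OF inj, of "G - {t0}"] by (simp add: sum.reindex)
    have c0H: "c0 *\<^sub>R u l = (\<Sum>s\<in>{g t0}. cz x z s *\<^sub>R u (fst s))" unfolding c0_def gt0[symmetric] by simp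
    have finH: "finite (g ` G)" using finG by simp
    have nA: "norm A \<le> Zval x u z (g ` G)"
      unfolding R RsH AH by (rule proj_pair[OF unc finH injf]) blast
    have nc0: "c0 \<le> Zval x u z (g ` G)"
    proof -
      have "c0 = norm (c0 *\<^sub>R u l)" using nu c0nn by simp
      also have "\<dots> \<le> Zval x u z (g ` G)"
        unfolding R RsH c0H by (rule proj_pair[OF unc finH injf]) (use t0 in blast)
      finally show ?thesis .
    qed
    have "Zval x u (rest l r z) F \<le> norm (c0 *\<^sub>R u (fst t0)) + norm A"
      unfolding L Ls by (rule norm_triangle_ineq)
    also have "norm (c0 *\<^sub>R u (fst t0)) = c0" using nu c0nn by simp
    finally have "Zval x u (rest l r z) F \<le> 2 * Zval x u z (g ` G)" using nA nc0 by linarith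
    then show ?thesis using goodG inside by blast
  qed
qed




definition Tprop :: "(nat \<Rightarrow> 'b::real_normed_vector) \<Rightarrow> real \<Rightarrow> bool" where
  "Tprop u C \<longleftrightarrow> (\<forall>n v.
     (\<forall>j\<in>{1..n}. norm (v j) = 1 \<and> finite (supp u (v j)) \<and> supp u (v j) \<noteq> {})
     \<and> (\<forall>j. 1 \<le> j \<and> j < n \<longrightarrow> Max (supp u (v j)) < Min (supp u (v (Suc j))))
     \<and> n \<le> Min (supp u (v 1)) + 1
     \<longrightarrow> (\<forall>a. (1 / C) * (\<Sum>j=1..n. \<bar>a j\<bar>) \<le> norm (\<Sum>j=1..n. a j *\<^sub>R v j)
              \<and> norm (\<Sum>j=1..n. a j *\<^sub>R v j) \<le> C * (\<Sum>j=1..n. \<bar>a j\<bar>)))"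

lemma tsirelson_Tprop: "tsirelson u \<longleftrightarrow> (\<exists>C>0. Tprop u C)"
  unfolding tsirelson_def Tprop_def by simp

lemma Znorm_rest:
  fixes x :: "nat \<Rightarrow> 'a::real_normed_vector" and u :: "nat \<Rightarrow> 'b::real_normed_vector"
  assumes nx: "\<forall>n. norm (x n) = 1" and nu: "\<forall>n. norm (u n) = 1" and unc: "unconditional1 u"
    and fs: "\<forall>i\<ge>N. z i = 0" and lr: "l < r"
  shows "Znorm x u (rest l r z) \<le> 2 * Znorm x u z"
  unfolding Znorm_ZS[of x u "rest l r z"]
proof (rule cSup_least[OF ZS_ne])
  fix s assume "s \<in> ZS x u (rest l r z)"
  then obtain F where F: "good F" "s = Zval x u (rest l r z) F" by (rule ZS_elem)
  obtain F' where F': "good F'" "Zval x u (rest l r z) F \<le> 2 * Zval x u z F'"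
    using restrict_Zval[OF nu unc F(1) lr, of x z] by blast
  have "Zval x u z F' \<le> Znorm x u z" by (rule Zval_le_Znorm[OF nx nu F'(1) fs])
  then show "s \<le> 2 * Znorm x u z" using F F' by linarith
qed

lemma supp_repr:
  fixes u :: "nat \<Rightarrow> 'b::real_normed_vector"
  assumes sb: "schauder_basis u" and fin: "finite P" and v: "v = (\<Sum>k\<in>P. c k *\<^sub>R u k)" and nv: "norm v = 1"
  shows "finite (supp u v)" "supp u v \<noteq> {}" "supp u v \<subseteq> P"
proof -
  have s: "supp u v = {k\<in>P. c k \<noteq> 0}" unfolding v by (rule supp_finsum[OF sb fin])
  show "finite (supp u v)" "supp u v \<subseteq> P" unfolding s using fin by auto
  show "supp u v \<noteq> {}"
  proof
    assume "supp u v = {}"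
    then have "\<forall>k\<in>P. c k = 0" unfolding s by auto
    then have "v = 0" unfolding v by simp
    then show False using nv by simp
  qed
qed

lemma mono_chain:
  assumes "\<forall>j<K. (e::nat\<Rightarrow>nat) j < e (Suc j)"
  shows "i \<le> j \<Longrightarrow> j \<le> K \<Longrightarrow> e i \<le> e j"
proof (induction j)
  case 0 then show ?case by simp
next
  case (Suc j)
  show ?case
  proof (cases "i = Suc j")
    case True then show ?thesis by simp
  next
    case False
    then have "e i \<le> e j" using Suc by simp
    also have "e j < e (Suc j)" using assms Suc.prems by simp
    finally show ?thesis by simp
  qed
qed


lemma KL_core:
  fixes x :: "nat \<Rightarrow> 'a::real_normed_vector" and u :: "nat \<Rightarrow> 'b::real_normed_vector"
  assumes nx: "\<forall>n. norm (x n) = 1" and nu: "\<forall>n. norm (u n) = 1" and sb: "schauder_basis u"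
    and T: "Tprop u CT" and CT: "CT > 0"
    and e: "\<forall>j<K. e j < e (Suc j)" and Ke: "K \<le> e 0" and fs: "\<forall>i\<ge>N. z i = 0"
    and F: "\<forall>j<K. good (F j) \<and> (\<forall>t\<in>F j. e j \<le> fst t \<and> snd t < e (Suc j))"
  shows "(\<Sum>j<K. Zval x u z (F j)) \<le> CT * Znorm x u z"
proof -
  define w where "w j = (\<Sum>t\<in>F j. cz x z t *\<^sub>R u (fst t))" for j
  have Zw: "Zval x u z (F j) = norm (w j)" for j unfolding Zval_def w_def by simp
  have sep: "snd t < fst t'" if "j < j'" "j' < K" "t \<in> F j" "t' \<in> F j'" for j j' t t'
  proof -
    have "snd t < e (Suc j)" using F that by auto
    also have "e (Suc j) \<le> e j'" using mono_chain[OF e, of "Suc j" j'] that by simp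
    also have "e j' \<le> fst t'" using F that by auto
    finally show ?thesis .
  qed
  have gF: "\<And>j t. j < K \<Longrightarrow> t \<in> F j \<Longrightarrow> fst t \<le> snd t" using F unfolding good_def by blast
  define FU where "FU = (\<Union>j\<in>{..<K}. F j)"
  have goodU: "good FU" unfolding good_def
  proof (intro conjI ballI impI)
    show "finite FU" unfolding FU_def using F unfolding good_def by auto
  next
    fix t assume "t \<in> FU" then show "fst t \<le> snd t" unfolding FU_def using gF by auto
  next
    fix t t' assume t: "t \<in> FU" and t': "t' \<in> FU" and ne: "t \<noteq> t'"
    obtain j where j: "j < K" "t \<in> F j" using t unfolding FU_def by auto
    obtain j' where j': "j' < K" "t' \<in> F j'" using t' unfolding FU_def by auto
    consider "j = j'" | "j < j'" | "j' < j" by linarith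
    then show "snd t < fst t' \<or> snd t' < fst t"
    proof cases
      case 1 then show ?thesis using F j j' ne unfolding good_def by blast
    next
      case 2 then show ?thesis using sep j j' by blast
    next
      case 3 then show ?thesis using sep j j' by blast
    qed
  qed
  have sumU: "(\<Sum>t\<in>FU. cz x z t *\<^sub>R u (fst t)) = (\<Sum>j<K. w j)"
    unfolding FU_def w_def
  proof (rule sum.UNION_disjoint)
    show "finite {..<K}" by simp
    show "\<forall>j\<in>{..<K}. finite (F j)" using F unfolding good_def by auto
    show "\<forall>j\<in>{..<K}. \<forall>j'\<in>{..<K}. j \<noteq> j' \<longrightarrow> F j \<inter> F j' = {}"
    proof (intro ballI impI)
      fix j j' assume j: "j \<in> {..<K}" and j': "j' \<in> {..<K}" and ne: "j \<noteq> j'"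
      show "F j \<inter> F j' = {}"
      proof (rule ccontr)
        assume "F j \<inter> F j' \<noteq> {}"
        then obtain t where t: "t \<in> F j" "t \<in> F j'" by blast
        have "snd t < fst t" using ne sep[of j j' t t] sep[of j' j t t] j j' t by (cases "j < j'") auto
        then show False using gF[of j t] j t by simp
      qed
    qed
  qed
  have Ubound: "norm (\<Sum>j<K. w j) \<le> Znorm x u z"
    using Zval_le_Znorm[OF nx nu goodU fs] unfolding Zval_def sumU .
  define vv where "vv i = (if w i = 0 then u (e i) else (1 / norm (w i)) *\<^sub>R w i)" for i
  define v where "v j = vv (j - 1)" for j
  define a where "a j = norm (w (j - 1))" for j
  have repr: "\<exists>P c. finite P \<and> P \<subseteq> {e i..<e (Suc i)} \<and> vv i = (\<Sum>k\<in>P. c k *\<^sub>R u k)" if "i < K" for i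
  proof (cases "w i = 0")
    case True
    then show ?thesis unfolding vv_def using e that
      by (intro exI[of _ "{e i}"] exI[of _ "\<lambda>_. 1"]) auto
  next
    case False
    have gi: "good (F i)" using F that by blast
    have inj: "inj_on fst (F i)" by (rule good_inj_fst[OF gi])
    have finF: "finite (F i)" using gi unfolding good_def by blast
    define \<beta> where "\<beta> k = cz x z (inv_into (F i) fst k)" for k
    have "w i = (\<Sum>k\<in>fst ` F i. \<beta> k *\<^sub>R u k)"
    proof -
      have "(\<Sum>k\<in>fst ` F i. \<beta> k *\<^sub>R u k) = (\<Sum>t\<in>F i. \<beta> (fst t) *\<^sub>R u (fst t))"
        by (simp add: sum.reindex[OF inj])
      also have "\<dots> = w i" unfolding w_def
        by (rule sum.cong) (simp_all add: \<beta>_def inv_into_f_f[OF inj])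
      finally show ?thesis by simp
    qed
    moreover have "vv i = (1 / norm (w i)) *\<^sub>R w i" using False unfolding vv_def by simp
    ultimately have vvs: "vv i = (\<Sum>k\<in>fst ` F i. (1 / norm (w i) * \<beta> k) *\<^sub>R u k)"
      by (simp add: scaleR_sum_right)
    have sub: "fst ` F i \<subseteq> {e i..<e (Suc i)}"
    proof
      fix k assume "k \<in> fst ` F i"
      then obtain t where t: "t \<in> F i" "k = fst t" by blast
      have "e i \<le> fst t" "snd t < e (Suc i)" using F that t(1) by auto
      moreover have "fst t \<le> snd t" using gF[OF that t(1)] .
      ultimately show "k \<in> {e i..<e (Suc i)}" using t(2) by simp
    qed
    show ?thesis using finF sub vvs
      by (intro exI[of _ "fst ` F i"] exI[of _ "\<lambda>k. 1 / norm (w i) * \<beta> k"]) simp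
  qed
  have nvv: "norm (vv i) = 1" for i unfolding vv_def using nu by auto
  have Sfacts: "finite (supp u (vv i)) \<and> supp u (vv i) \<noteq> {} \<and> supp u (vv i) \<subseteq> {e i..<e (Suc i)}"
    if iK: "i < K" for i
  proof -
    obtain P c where P: "finite P" "P \<subseteq> {e i..<e (Suc i)}" "vv i = (\<Sum>k\<in>P. c k *\<^sub>R u k)"
      using repr[OF iK] by blast
    from supp_repr[OF sb P(1) P(3) nvv] P(2) show ?thesis by blast
  qed
  have c1: "\<forall>j\<in>{1..K}. norm (v j) = 1 \<and> finite (supp u (v j)) \<and> supp u (v j) \<noteq> {}"
    unfolding v_def using nvv Sfacts by auto
  have c2: "\<forall>j. 1 \<le> j \<and> j < K \<longrightarrow> Max (supp u (v j)) < Min (supp u (v (Suc j)))"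
  proof (intro allI impI)
    fix j assume j: "1 \<le> j \<and> j < K"
    have A: "finite (supp u (vv (j - 1)))" "supp u (vv (j - 1)) \<noteq> {}" "supp u (vv (j - 1)) \<subseteq> {e (j - 1)..<e j}"
    proof -
      have "j - 1 < K" "Suc (j - 1) = j" using j by auto
      then show "finite (supp u (vv (j - 1)))" "supp u (vv (j - 1)) \<noteq> {}" "supp u (vv (j - 1)) \<subseteq> {e (j - 1)..<e j}"
        using Sfacts[of "j - 1"] by metis+
    qed
    have B: "finite (supp u (vv j))" "supp u (vv j) \<noteq> {}" "supp u (vv j) \<subseteq> {e j..<e (Suc j)}"
      using Sfacts[of j] j by auto
    have "Max (supp u (vv (j - 1))) < e j" using Max_in[OF A(1,2)] A(3) by auto
    also have "e j \<le> Min (supp u (vv j))" using Min_in[OF B(1,2)] B(3) by auto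
    finally show "Max (supp u (v j)) < Min (supp u (v (Suc j)))" unfolding v_def by simp
  qed
  have c3: "K \<le> Min (supp u (v 1)) + 1"
  proof (cases "K = 0")
    case True then show ?thesis by simp
  next
    case False
    then have B: "finite (supp u (vv 0))" "supp u (vv 0) \<noteq> {}" "supp u (vv 0) \<subseteq> {e 0..<e (Suc 0)}"
      using Sfacts[of 0] by auto
    have "e 0 \<le> Min (supp u (vv 0))" using Min_in[OF B(1,2)] B(3) by auto
    then show ?thesis using Ke unfolding v_def by simp
  qed
  have "(1 / CT) * (\<Sum>j=1..K. \<bar>a j\<bar>) \<le> norm (\<Sum>j=1..K. a j *\<^sub>R v j)"
    using T c1 c2 c3 unfolding Tprop_def by blast
  moreover have "(\<Sum>j=1..K. \<bar>a j\<bar>) = (\<Sum>j<K. norm (w j))"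
    unfolding a_def by (simp add: sum.atLeast1_atMost_eq)
  moreover have "(\<Sum>j=1..K. a j *\<^sub>R v j) = (\<Sum>j<K. w j)"
    unfolding a_def v_def vv_def by (simp add: sum.atLeast1_atMost_eq) (rule sum.cong, auto)
  ultimately have "(1 / CT) * (\<Sum>j<K. norm (w j)) \<le> norm (\<Sum>j<K. w j)" by simp
  then have "(\<Sum>j<K. norm (w j)) \<le> CT * norm (\<Sum>j<K. w j)" using CT by (simp add: field_simps)
  also have "\<dots> \<le> CT * Znorm x u z" using Ubound CT by simp
  finally show ?thesis unfolding Zw .
qed




lemma sum_Sup_le:
  fixes S :: "nat \<Rightarrow> real set"
  assumes ne: "\<forall>j<K. S j \<noteq> {} \<and> bdd_above (S j)"
    and H: "\<And>f. (\<forall>j<K. f j \<in> S j) \<Longrightarrow> (\<Sum>j<K. f j) \<le> B"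
  shows "(\<Sum>j<K. Sup (S j)) \<le> B"
proof (rule field_le_epsilon)
  fix \<epsilon> :: real assume \<epsilon>: "0 < \<epsilon>"
  define d where "d = \<epsilon> / (real K + 1)"
  have d: "0 < d" unfolding d_def using \<epsilon> by simp
  have "\<forall>j. \<exists>s. j < K \<longrightarrow> s \<in> S j \<and> Sup (S j) - d < s"
  proof
    fix j show "\<exists>s. j < K \<longrightarrow> s \<in> S j \<and> Sup (S j) - d < s"
    proof (cases "j < K")
      case True
      then have "Sup (S j) - d < Sup (S j)" using d by simp
      moreover have "S j \<noteq> {}" "bdd_above (S j)" using ne True by auto
      ultimately obtain s where "s \<in> S j" "Sup (S j) - d < s"
        using less_cSup_iff by blast
      then show ?thesis using True by blast
    qed simp
  qed
  from choice[OF this] obtain f where f: "\<forall>j<K. f j \<in> S j \<and> Sup (S j) - d < f j" by blast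
  have "(\<Sum>j<K. Sup (S j)) \<le> (\<Sum>j<K. f j + d)" by (rule sum_mono) (use f in \<open>auto simp: less_imp_le\<close>)
  also have "\<dots> = (\<Sum>j<K. f j) + real K * d" by (simp add: sum.distrib)
  also have "(\<Sum>j<K. f j) \<le> B" using H f by blast
  also have "real K * d \<le> \<epsilon>" unfolding d_def using \<epsilon> by (simp add: field_simps)
  finally show "(\<Sum>j<K. Sup (S j)) \<le> B + \<epsilon>" by simp
qed

lemma KL:
  fixes x :: "nat \<Rightarrow> 'a::real_normed_vector" and u :: "nat \<Rightarrow> 'b::real_normed_vector"
  assumes nx: "\<forall>n. norm (x n) = 1" and nu: "\<forall>n. norm (u n) = 1" and sb: "schauder_basis u"
    and unc: "unconditional1 u" and T: "Tprop u CT" and CT: "CT > 0"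
    and e: "\<forall>j<K. e j < e (Suc j)" and Ke: "K \<le> e 0" and fs: "\<forall>i\<ge>N. z i = 0"
  shows "(\<Sum>j<K. Znorm x u (rest (e j) (e (Suc j)) z)) \<le> 2 * CT * Znorm x u z"
  unfolding Znorm_ZS[of x u "rest _ _ z"]
proof (rule sum_Sup_le)
  have fsr: "\<forall>i\<ge>N. rest l r z i = 0" for l r using fs unfolding rest_def by simp
  show "\<forall>j<K. ZS x u (rest (e j) (e (Suc j)) z) \<noteq> {} \<and> bdd_above (ZS x u (rest (e j) (e (Suc j)) z))"
  proof (intro allI impI conjI)
    fix j
    show "ZS x u (rest (e j) (e (Suc j)) z) \<noteq> {}" by (rule ZS_ne)
    show "bdd_above (ZS x u (rest (e j) (e (Suc j)) z))" by (rule ZS_bdd[OF nx nu fsr])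
  qed
  fix f assume f: "\<forall>j<K. f j \<in> ZS x u (rest (e j) (e (Suc j)) z)"
  have "\<forall>j. \<exists>F'. j < K \<longrightarrow> good F' \<and> (\<forall>t\<in>F'. e j \<le> fst t \<and> snd t < e (Suc j)) \<and> f j \<le> 2 * Zval x u z F'"
  proof
    fix j show "\<exists>F'. j < K \<longrightarrow> good F' \<and> (\<forall>t\<in>F'. e j \<le> fst t \<and> snd t < e (Suc j)) \<and> f j \<le> 2 * Zval x u z F'"
    proof (cases "j < K")
      case True
      from f True have "f j \<in> ZS x u (rest (e j) (e (Suc j)) z)" by blast
      then obtain F where F: "good F" "f j = Zval x u (rest (e j) (e (Suc j)) z) F"
        by (rule ZS_elem)
      have lr: "e j < e (Suc j)" using e True by blast
      from restrict_Zval[OF nu unc F(1) lr, of x z] F(2) show ?thesis by auto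
    qed simp
  qed
  from choice[OF this] obtain F' where F': "\<forall>j<K. good (F' j) \<and> (\<forall>t\<in>F' j. e j \<le> fst t \<and> snd t < e (Suc j)) \<and> f j \<le> 2 * Zval x u z (F' j)"
    by blast
  have "(\<Sum>j<K. f j) \<le> (\<Sum>j<K. 2 * Zval x u z (F' j))" by (rule sum_mono) (use F' in auto)
  also have "\<dots> = 2 * (\<Sum>j<K. Zval x u z (F' j))" by (simp add: sum_distrib_left)
  also have "(\<Sum>j<K. Zval x u z (F' j)) \<le> CT * Znorm x u z"
    by (rule KL_core[OF nx nu sb T CT e Ke fs]) (use F' in blast)
  finally show "(\<Sum>j<K. f j) \<le> 2 * CT * Znorm x u z" by simp
qed




definition tail :: "nat \<Rightarrow> (nat \<Rightarrow> real) \<Rightarrow> nat \<Rightarrow> real" where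
  "tail m b i = (if m \<le> i then b i else 0)"

lemma sum_trunc:
  fixes f :: "nat \<Rightarrow> real"
  assumes "\<forall>i\<ge>n. f i = 0" "n \<le> m"
  shows "(\<Sum>i<m. f i) = (\<Sum>i<n. f i)"
  by (rule sum.mono_neutral_right) (use assms in auto)

lemma cz_scale: "cz x (\<lambda>i. c * z i) t = \<bar>c\<bar> * cz x z t"
proof -
  have "(\<Sum>i\<in>{fst t..snd t}. (c * z i) *\<^sub>R x i) = c *\<^sub>R (\<Sum>i\<in>{fst t..snd t}. z i *\<^sub>R x i)"
    by (simp add: scaleR_sum_right)
  then show ?thesis unfolding cz_def by simp
qed

lemma Zval_scale: "Zval x u (\<lambda>i. c * z i) F = \<bar>c\<bar> * Zval x u z F"
proof -
  have "(\<Sum>t\<in>F. cz x (\<lambda>i. c * z i) t *\<^sub>R u (fst t)) = \<bar>c\<bar> *\<^sub>R (\<Sum>t\<in>F. cz x z t *\<^sub>R u (fst t))"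
    by (simp add: cz_scale scaleR_sum_right)
  then show ?thesis unfolding Zval_def by simp
qed

context
  fixes x :: "nat \<Rightarrow> 'a::real_normed_vector" and u :: "nat \<Rightarrow> 'b::real_normed_vector"
  assumes nx: "\<forall>n. norm (x n) = 1" and nu: "\<forall>n. norm (u n) = 1"
begin

lemma Znorm_zero: "Znorm x u (\<lambda>i. 0) \<le> 0"
  using Znorm_le_sum[OF nx nu, of 0 "\<lambda>i. 0"] by simp

lemma zero_in_dual: "0 \<in> dual_set x u b"
  unfolding dual_set_def mem_Collect_eq
  by (rule exI[of _ "\<lambda>i. 0"], rule exI[of _ 0]) (use Znorm_zero in simp)

lemma dual_ne: "dual_set x u b \<noteq> {}" using zero_in_dual by blast

lemma dualnorm_nonneg: "bdd_above (dual_set x u b) \<Longrightarrow> 0 \<le> dualnorm x u b"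
  unfolding dualnorm_def by (rule cSup_upper[OF zero_in_dual])

lemma dual_le: "bdd_above (dual_set x u b) \<Longrightarrow> s \<in> dual_set x u b \<Longrightarrow> s \<le> dualnorm x u b"
  unfolding dualnorm_def by (rule cSup_upper)

lemma dualnorm_le: "(\<And>s. s \<in> dual_set x u b \<Longrightarrow> s \<le> B) \<Longrightarrow> dualnorm x u b \<le> B"
  unfolding dualnorm_def by (rule cSup_least[OF dual_ne])

lemma pair_le:
  assumes bd: "bdd_above (dual_set x u b)" and fs: "\<forall>i\<ge>n. a i = 0"
  shows "\<bar>\<Sum>i<n. a i * b i\<bar> \<le> dualnorm x u b * Znorm x u a"
proof -
  define Z where "Z = Znorm x u a"
  have Z0: "0 \<le> Z" unfolding Z_def by (rule Znorm_nonneg[OF nx nu fs])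
  show ?thesis
  proof (cases "Z = 0")
    case True
    then have "\<forall>i. a i = 0" using abs_le_Znorm[OF nx nu fs] unfolding Z_def by (metis abs_le_zero_iff)
    then show ?thesis using True unfolding Z_def by simp
  next
    case False
    then have Zp: "0 < Z" using Z0 by simp
    define a' where "a' = (\<lambda>i. (1 / Z) * a i)"
    have fs': "\<forall>i\<ge>n. a' i = 0" unfolding a'_def using fs by simp
    have "Znorm x u a' \<le> 1"
      unfolding Znorm_ZS
    proof (rule cSup_least[OF ZS_ne])
      fix s assume "s \<in> ZS x u a'"
      then obtain F where F: "good F" "s = Zval x u a' F" by (rule ZS_elem)
      have "s = (1 / Z) * Zval x u a F" unfolding F(2) a'_def Zval_scale using Zp by simp
      also have "Zval x u a F \<le> Z" unfolding Z_def by (rule Zval_le_Znorm[OF nx nu F(1) fs])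
      then have "(1 / Z) * Zval x u a F \<le> 1" using Zp by (simp add: field_simps)
      finally show "s \<le> 1" .
    qed
    then have "\<bar>\<Sum>i<n. a' i * b i\<bar> \<in> dual_set x u b" unfolding dual_set_def using fs' by blast
    then have "\<bar>\<Sum>i<n. a' i * b i\<bar> \<le> dualnorm x u b" by (rule dual_le[OF bd])
    moreover have "\<bar>\<Sum>i<n. a' i * b i\<bar> = \<bar>\<Sum>i<n. a i * b i\<bar> / Z"
      unfolding a'_def using Zp by (simp add: sum_divide_distrib[symmetric])
    ultimately show ?thesis using Zp unfolding Z_def[symmetric] by (simp add: field_simps)
  qed
qed

lemma coord_le_dualnorm:
  assumes bd: "bdd_above (dual_set x u b)"
  shows "\<bar>b i\<bar> \<le> dualnorm x u b"
proof -
  define a where "a j = (if j = i then 1 else 0::real)" for j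
  have fs: "\<forall>j\<ge>Suc i. a j = 0" unfolding a_def by simp
  have "(\<Sum>j<Suc i. a j * b j) = b i" unfolding a_def by simp
  then have "\<bar>b i\<bar> \<le> dualnorm x u b * Znorm x u a" using pair_le[OF bd fs] by simp
  moreover have "Znorm x u a \<le> 1"
    using Znorm_le_sum[OF nx nu fs] unfolding a_def by simp
  moreover have "0 \<le> Znorm x u a" by (rule Znorm_nonneg[OF nx nu fs])
  ultimately show ?thesis using dualnorm_nonneg[OF bd] mult_left_le[of "Znorm x u a" "dualnorm x u b"]
    by linarith
qed

lemma dual_elem:
  assumes "s \<in> dual_set x u b"
  obtains a n where "\<forall>i\<ge>n. a i = 0" "Znorm x u a \<le> 1" "s = \<bar>\<Sum>i<n. a i * b i\<bar>"
  using assms unfolding dual_set_def by blast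

lemma fin_bdd:
  assumes fsb: "\<forall>i\<ge>M. b i = 0"
  shows "bdd_above (dual_set x u b)"
proof (rule bdd_aboveI)
  fix s assume "s \<in> dual_set x u b"
  then obtain a n where a: "\<forall>i\<ge>n. a i = 0" "Znorm x u a \<le> 1" "s = \<bar>\<Sum>i<n. a i * b i\<bar>"
    by (rule dual_elem)
  have ab: "\<forall>i\<ge>min n M. a i * b i = 0" using a(1) fsb by (simp add: min_def)
  have "(\<Sum>i<n. a i * b i) = (\<Sum>i<min n M. a i * b i)" by (rule sum_trunc[OF ab]) simp
  also have "\<dots> = (\<Sum>i<M. a i * b i)" by (rule sum_trunc[OF ab, symmetric]) simp
  finally have "s = \<bar>\<Sum>i<M. a i * b i\<bar>" using a(3) by simp
  also have "\<dots> \<le> (\<Sum>i<M. \<bar>a i * b i\<bar>)" by (rule sum_abs)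
  also have "\<dots> \<le> (\<Sum>i<M. \<bar>b i\<bar>)"
  proof (rule sum_mono)
    fix i have "\<bar>a i\<bar> \<le> 1" using abs_le_Znorm[OF nx nu a(1), of i] a(2) by simp
    then show "\<bar>a i * b i\<bar> \<le> \<bar>b i\<bar>" by (simp add: abs_mult mult_left_le_one_le)
  qed
  finally show "s \<le> (\<Sum>i<M. \<bar>b i\<bar>)" .
qed

lemma lin_bdd:
  assumes b1: "bdd_above (dual_set x u b)" and b2: "bdd_above (dual_set x u b')"
  shows "bdd_above (dual_set x u (\<lambda>i. \<alpha> * b i + \<beta> * b' i)) \<and>
    dualnorm x u (\<lambda>i. \<alpha> * b i + \<beta> * b' i) \<le> \<bar>\<alpha>\<bar> * dualnorm x u b + \<bar>\<beta>\<bar> * dualnorm x u b'"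
proof -
  have el: "s \<le> \<bar>\<alpha>\<bar> * dualnorm x u b + \<bar>\<beta>\<bar> * dualnorm x u b'"
    if sd: "s \<in> dual_set x u (\<lambda>i. \<alpha> * b i + \<beta> * b' i)" for s
  proof -
    obtain a n where a: "\<forall>i\<ge>n. a i = 0" "Znorm x u a \<le> 1" "s = \<bar>\<Sum>i<n. a i * (\<alpha> * b i + \<beta> * b' i)\<bar>"
      using sd by (rule dual_elem)
    have e1: "\<bar>\<Sum>i<n. a i * b i\<bar> \<le> dualnorm x u b"
      by (rule dual_le[OF b1]) (use a in \<open>auto simp: dual_set_def\<close>)
    have e2: "\<bar>\<Sum>i<n. a i * b' i\<bar> \<le> dualnorm x u b'"
      by (rule dual_le[OF b2]) (use a in \<open>auto simp: dual_set_def\<close>)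
    have "(\<Sum>i<n. a i * (\<alpha> * b i + \<beta> * b' i)) = \<alpha> * (\<Sum>i<n. a i * b i) + \<beta> * (\<Sum>i<n. a i * b' i)"
      by (simp add: sum_distrib_left sum.distrib algebra_simps)
    then have "s = \<bar>\<alpha> * (\<Sum>i<n. a i * b i) + \<beta> * (\<Sum>i<n. a i * b' i)\<bar>" using a(3) by simp
    also have "\<dots> \<le> \<bar>\<alpha>\<bar> * \<bar>\<Sum>i<n. a i * b i\<bar> + \<bar>\<beta>\<bar> * \<bar>\<Sum>i<n. a i * b' i\<bar>"
      using abs_triangle_ineq[of "\<alpha> * (\<Sum>i<n. a i * b i)" "\<beta> * (\<Sum>i<n. a i * b' i)"] by (simp add: abs_mult)
    also have "\<dots> \<le> \<bar>\<alpha>\<bar> * dualnorm x u b + \<bar>\<beta>\<bar> * dualnorm x u b'"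
      by (intro add_mono mult_left_mono e1 e2) simp_all
    finally show ?thesis .
  qed
  show ?thesis
  proof
    show "bdd_above (dual_set x u (\<lambda>i. \<alpha> * b i + \<beta> * b' i))" using el by (rule bdd_aboveI)
    show "dualnorm x u (\<lambda>i. \<alpha> * b i + \<beta> * b' i) \<le> \<bar>\<alpha>\<bar> * dualnorm x u b + \<bar>\<beta>\<bar> * dualnorm x u b'"
      using el by (rule dualnorm_le)
  qed
qed

lemma tail_bdd:
  assumes unc: "unconditional1 u" and bd: "bdd_above (dual_set x u b)"
  shows "bdd_above (dual_set x u (tail m b)) \<and> dualnorm x u (tail m b) \<le> 2 * dualnorm x u b"
proof -
  have el: "s \<le> 2 * dualnorm x u b" if sd: "s \<in> dual_set x u (tail m b)" for s
  proof -
    obtain a n where a: "\<forall>i\<ge>n. a i = 0" "Znorm x u a \<le> 1" "s = \<bar>\<Sum>i<n. a i * tail m b i\<bar>"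
      using sd by (rule dual_elem)
    have dn0: "0 \<le> dualnorm x u b" by (rule dualnorm_nonneg[OF bd])
    show ?thesis
    proof (cases "m < n")
      case False
      then have "(\<Sum>i<n. a i * tail m b i) = 0" unfolding tail_def by (intro sum.neutral) auto
      then show ?thesis using a(3) dn0 by simp
    next
      case True
      have "(\<Sum>i<n. a i * tail m b i) = (\<Sum>i<n. rest m n a i * b i)"
        unfolding tail_def rest_def by (rule sum.cong) auto
      moreover have fsr: "\<forall>i\<ge>n. rest m n a i = 0" unfolding rest_def by simp
      ultimately have "s \<le> dualnorm x u b * Znorm x u (rest m n a)"
        using a(3) pair_le[OF bd fsr] by simp
      also have "Znorm x u (rest m n a) \<le> 2 * Znorm x u a"
        by (rule Znorm_rest[OF nx nu unc a(1) True])
      then have "Znorm x u (rest m n a) \<le> 2 * 1" using a(2) by linarith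
      then have "dualnorm x u b * Znorm x u (rest m n a) \<le> dualnorm x u b * (2 * 1)"
        by (rule mult_left_mono[OF _ dn0])
      finally show ?thesis by simp
    qed
  qed
  show ?thesis
  proof
    show "bdd_above (dual_set x u (tail m b))" using el by (rule bdd_aboveI)
    show "dualnorm x u (tail m b) \<le> 2 * dualnorm x u b" using el by (rule dualnorm_le)
  qed
qed

end




definition Wsub :: "(nat \<Rightarrow> 'a::real_normed_vector) \<Rightarrow> (nat \<Rightarrow> 'b::real_normed_vector) \<Rightarrow> nat \<Rightarrow> (nat \<Rightarrow> real) set" where
  "Wsub x u m = {b \<in> Yspace x u. \<forall>i<m. b i = 0}"

context
  fixes x :: "nat \<Rightarrow> 'a::real_normed_vector" and u :: "nat \<Rightarrow> 'b::real_normed_vector"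
  assumes nx: "\<forall>n. norm (x n) = 1" and nu: "\<forall>n. norm (u n) = 1"
begin

lemma Y_fin:
  assumes "\<forall>i\<ge>M. b i = 0"
  shows "b \<in> Yspace x u"
  unfolding Yspace_def
proof (intro CollectI allI impI)
  fix \<epsilon> :: real assume \<epsilon>: "0 < \<epsilon>"
  have z: "(\<lambda>i. b i - b i) = (\<lambda>i. 0)" by simp
  have bd: "bdd_above (dual_set x u (\<lambda>i. 0::real))" by (rule fin_bdd[OF nx nu, of 0]) simp
  have "dualnorm x u (\<lambda>i. 0::real) \<le> 0"
  proof (rule dualnorm_le[OF nx nu])
    fix s assume "s \<in> dual_set x u (\<lambda>i. 0::real)"
    then show "s \<le> 0" unfolding dual_set_def by auto
  qed
  then show "\<exists>c m. (\<forall>i\<ge>m. c i = 0) \<and> bdd_above (dual_set x u (\<lambda>i. b i - c i)) \<and> dualnorm x u (\<lambda>i. b i - c i) < \<epsilon>"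
    using assms bd \<epsilon> unfolding z by (intro exI[of _ b] exI[of _ M]) simp
qed

lemma Y_bdd:
  assumes "b \<in> Yspace x u"
  shows "bdd_above (dual_set x u b)"
proof -
  have "\<forall>\<epsilon>>0. \<exists>c m. (\<forall>i\<ge>m. c i = 0) \<and> bdd_above (dual_set x u (\<lambda>i. b i - c i)) \<and> dualnorm x u (\<lambda>i. b i - c i) < \<epsilon>"
    using assms unfolding Yspace_def by simp
  from this[rule_format, of 1] obtain c m where c: "\<forall>i\<ge>m. c i = 0" "bdd_above (dual_set x u (\<lambda>i. b i - c i))"
    by auto
  have "bdd_above (dual_set x u c)" by (rule fin_bdd[OF nx nu c(1)])
  from lin_bdd[OF nx nu c(2) this, of 1 1] show ?thesis by simp
qed

lemma Y_lin:
  assumes b1: "b \<in> Yspace x u" and b2: "b' \<in> Yspace x u"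
  shows "(\<lambda>i. \<alpha> * b i + \<beta> * b' i) \<in> Yspace x u"
  unfolding Yspace_def
proof (intro CollectI allI impI)
  fix \<epsilon> :: real assume \<epsilon>: "0 < \<epsilon>"
  define \<delta> where "\<delta> = \<epsilon> / (\<bar>\<alpha>\<bar> + \<bar>\<beta>\<bar> + 1)"
  have \<delta>: "0 < \<delta>" unfolding \<delta>_def using \<epsilon> by (simp add: add_nonneg_pos)
  obtain c m where c: "\<forall>i\<ge>m. c i = 0" "bdd_above (dual_set x u (\<lambda>i. b i - c i))"
     "dualnorm x u (\<lambda>i. b i - c i) < \<delta>"
    using b1 \<delta> unfolding Yspace_def by blast
  obtain c' m' where c': "\<forall>i\<ge>m'. c' i = 0" "bdd_above (dual_set x u (\<lambda>i. b' i - c' i))"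
     "dualnorm x u (\<lambda>i. b' i - c' i) < \<delta>"
    using b2 \<delta> unfolding Yspace_def by blast
  define cc where "cc i = \<alpha> * c i + \<beta> * c' i" for i
  have fcc: "\<forall>i\<ge>max m m'. cc i = 0" unfolding cc_def using c(1) c'(1) by simp
  have eq: "(\<lambda>i. (\<alpha> * b i + \<beta> * b' i) - cc i) = (\<lambda>i. \<alpha> * (b i - c i) + \<beta> * (b' i - c' i))"
    unfolding cc_def by (simp add: algebra_simps)
  have L: "bdd_above (dual_set x u (\<lambda>i. \<alpha> * (b i - c i) + \<beta> * (b' i - c' i))) \<and>
    dualnorm x u (\<lambda>i. \<alpha> * (b i - c i) + \<beta> * (b' i - c' i)) \<le> \<bar>\<alpha>\<bar> * dualnorm x u (\<lambda>i. b i - c i) + \<bar>\<beta>\<bar> * dualnorm x u (\<lambda>i. b' i - c' i)"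
    by (rule lin_bdd[OF nx nu c(2) c'(2)])
  have "\<bar>\<alpha>\<bar> * dualnorm x u (\<lambda>i. b i - c i) + \<bar>\<beta>\<bar> * dualnorm x u (\<lambda>i. b' i - c' i) \<le> \<bar>\<alpha>\<bar> * \<delta> + \<bar>\<beta>\<bar> * \<delta>"
    using c(3) c'(3) by (intro add_mono mult_left_mono) auto
  also have "\<dots> < \<epsilon>"
  proof -
    have "(\<bar>\<alpha>\<bar> + \<bar>\<beta>\<bar>) * \<delta> < (\<bar>\<alpha>\<bar> + \<bar>\<beta>\<bar> + 1) * \<delta>" using \<delta> by simp
    also have "\<dots> = \<epsilon>" unfolding \<delta>_def by (simp add: add_nonneg_pos)
    finally show ?thesis by (simp add: algebra_simps)
  qed
  finally have "dualnorm x u (\<lambda>i. \<alpha> * (b i - c i) + \<beta> * (b' i - c' i)) < \<epsilon>" using L by linarith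
  then show "\<exists>c m. (\<forall>i\<ge>m. c i = 0) \<and> bdd_above (dual_set x u (\<lambda>i. \<alpha> * b i + \<beta> * b' i - c i)) \<and>
      dualnorm x u (\<lambda>i. \<alpha> * b i + \<beta> * b' i - c i) < \<epsilon>"
    using fcc L eq by (intro exI[of _ cc] exI[of _ "max m m'"]) simp
qed

lemma Y_add: "b \<in> Yspace x u \<Longrightarrow> b' \<in> Yspace x u \<Longrightarrow> (\<lambda>i. b i + b' i) \<in> Yspace x u"
  using Y_lin[of b b' 1 1] by simp

lemma Y_smul: "b \<in> Yspace x u \<Longrightarrow> (\<lambda>i. c * b i) \<in> Yspace x u"
  using Y_lin[of b b c 0] by simp

lemma Y_diff: "b \<in> Yspace x u \<Longrightarrow> b' \<in> Yspace x u \<Longrightarrow> (\<lambda>i. b i - b' i) \<in> Yspace x u"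
  using Y_lin[of b b' 1 "-1"] by simp

lemma W_closed_fincodim: "closed_fincodim (Yspace x u) (dualnorm x u) (Wsub x u m)"
  unfolding closed_fincodim_def
proof (intro conjI)
  show "Wsub x u m \<subseteq> Yspace x u" unfolding Wsub_def by blast
  show "(\<lambda>i. 0) \<in> Wsub x u m" unfolding Wsub_def by (auto intro: Y_fin[of 0])
  show "\<forall>w1\<in>Wsub x u m. \<forall>w2\<in>Wsub x u m. (\<lambda>i. w1 i + w2 i) \<in> Wsub x u m"
    unfolding Wsub_def by (auto intro: Y_add)
  show "\<forall>c. \<forall>w\<in>Wsub x u m. (\<lambda>i. c * w i) \<in> Wsub x u m"
    unfolding Wsub_def by (auto intro: Y_smul)
  show "\<forall>s y. (\<forall>n. s n \<in> Wsub x u m) \<and> y \<in> Yspace x u \<and> (\<lambda>n. dualnorm x u (\<lambda>i. s n i - y i)) \<longlonglongrightarrow> 0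
      \<longrightarrow> y \<in> Wsub x u m"
  proof (intro allI impI)
    fix s y assume H: "(\<forall>n. s n \<in> Wsub x u m) \<and> y \<in> Yspace x u \<and> (\<lambda>n. dualnorm x u (\<lambda>i. s n i - y i)) \<longlonglongrightarrow> 0"
    have "y i = 0" if "i < m" for i
    proof -
      have le: "\<bar>y i\<bar> \<le> dualnorm x u (\<lambda>i. s n i - y i)" for n
      proof -
        have sn: "s n \<in> Yspace x u" "s n i = 0" using H that unfolding Wsub_def by auto
        have "bdd_above (dual_set x u (\<lambda>i. s n i - y i))" by (rule Y_bdd[OF Y_diff[OF sn(1)]]) (use H in blast)
        from coord_le_dualnorm[OF nx nu this, of i] sn(2) show ?thesis by simp
      qed
      have "\<bar>y i\<bar> \<le> 0" by (rule LIMSEQ_le_const[of _ 0]) (use H le in auto)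
      then show ?thesis by simp
    qed
    then show "y \<in> Wsub x u m" unfolding Wsub_def using H by blast
  qed
  define ee :: "nat \<Rightarrow> nat \<Rightarrow> real" where "ee j = (\<lambda>t. if t = j then 1 else 0)" for j
  define S where "S = ee ` {..<m}"
  show "\<exists>S. finite S \<and> S \<subseteq> Yspace x u \<and> (\<forall>v\<in>Yspace x u. \<exists>w\<in>Wsub x u m. \<exists>c. v = (\<lambda>i. w i + (\<Sum>s\<in>S. c s * s i)))"
  proof (intro exI[of _ S] conjI ballI)
    show "finite S" unfolding S_def by simp
    show "S \<subseteq> Yspace x u"
    proof
      fix s assume "s \<in> S"
      then obtain j where j: "s = ee j" unfolding S_def by blast
      show "s \<in> Yspace x u" unfolding j by (rule Y_fin[of "Suc j"]) (simp add: ee_def)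
    qed
  next
    fix v assume v: "v \<in> Yspace x u"
    define h where "h t = (if t < m then v t else 0)" for t
    have hY: "h \<in> Yspace x u" by (rule Y_fin[of m]) (simp add: h_def)
    define w where "w t = v t - h t" for t
    have wW: "w \<in> Wsub x u m" unfolding Wsub_def w_def using Y_diff[OF v hY] by (auto simp: h_def)
    define c where "c s = (\<Sum>i<m. s i * v i)" for s :: "nat \<Rightarrow> real"
    have inj: "inj_on ee {..<m}"
    proof (rule inj_onI)
      fix j j' assume "ee j = ee j'"
      then have "ee j j = ee j' j" by simp
      then show "j = j'" unfolding ee_def by (auto split: if_splits)
    qed
    have ce: "c (ee j) = v j" if "j < m" for j
    proof -
      have "c (ee j) = (\<Sum>i<m. if i = j then v i else 0)" unfolding c_def ee_def by (rule sum.cong) auto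
      then show ?thesis using that by simp
    qed
    have "v = (\<lambda>i. w i + (\<Sum>s\<in>S. c s * s i))"
    proof
      fix t
      have "(\<Sum>s\<in>S. c s * s t) = (\<Sum>j<m. c (ee j) * ee j t)" unfolding S_def by (simp add: sum.reindex[OF inj])
      also have "\<dots> = (\<Sum>j<m. v j * ee j t)" by (rule sum.cong) (simp_all add: ce)
      also have "\<dots> = (\<Sum>j<m. if j = t then v t else 0)" unfolding ee_def by (rule sum.cong) auto
      also have "\<dots> = h t" unfolding h_def by simp
      finally show "v t = w t + (\<Sum>s\<in>S. c s * s t)" unfolding w_def by simp
    qed
    then show "\<exists>w\<in>Wsub x u m. \<exists>c. v = (\<lambda>i. w i + (\<Sum>s\<in>S. c s * s i))" using wW by blast
  qed
qed

end




definition Inv :: "(nat \<Rightarrow> 'a::real_normed_vector) \<Rightarrow> (nat \<Rightarrow> 'b::real_normed_vector) \<Rightarrow> nat \<Rightarrow> real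
    \<Rightarrow> (nat \<Rightarrow> real) list \<Rightarrow> (nat \<Rightarrow> nat) \<Rightarrow> bool" where
  "Inv x u K \<delta> ys l \<longleftrightarrow> K \<le> l 0 \<and>
    (\<forall>j. Suc j < length ys \<longrightarrow> l j < l (Suc j)) \<and>
    (\<forall>j<length ys. ys ! j \<in> Yspace x u \<and> dualnorm x u (ys ! j) = 1 \<and> (\<forall>i<l j. (ys ! j) i = 0)) \<and>
    (\<forall>j. Suc j < length ys \<longrightarrow> bdd_above (dual_set x u (tail (l (Suc j)) (ys ! j))) \<and>
        dualnorm x u (tail (l (Suc j)) (ys ! j)) \<le> \<delta>)"

context
  fixes x :: "nat \<Rightarrow> 'a::real_normed_vector" and u :: "nat \<Rightarrow> 'b::real_normed_vector"
  assumes nx: "\<forall>n. norm (x n) = 1" and nu: "\<forall>n. norm (u n) = 1"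
    and sb: "schauder_basis u" and unc: "unconditional1 u"
begin

lemma step:
  assumes I: "Inv x u K \<delta> ys l" and len: "length ys < K" and \<delta>: "0 < \<delta>"
  shows "\<exists>m'. closed_fincodim (Yspace x u) (dualnorm x u) (Wsub x u m') \<and>
     (\<forall>y\<in>Wsub x u m'. dualnorm x u y = 1 \<longrightarrow> Inv x u K \<delta> (ys @ [y]) (l(length ys := m')))"
proof -
  define n where "n = length ys"
  have I': "K \<le> l 0 \<and> (\<forall>j. Suc j < n \<longrightarrow> l j < l (Suc j)) \<and>
    (\<forall>j<n. ys ! j \<in> Yspace x u \<and> dualnorm x u (ys ! j) = 1 \<and> (\<forall>i<l j. (ys ! j) i = 0)) \<and>
    (\<forall>j. Suc j < n \<longrightarrow> bdd_above (dual_set x u (tail (l (Suc j)) (ys ! j))) \<and>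
        dualnorm x u (tail (l (Suc j)) (ys ! j)) \<le> \<delta>)"
    using I unfolding Inv_def n_def .
  have I1: "K \<le> l 0" using I' by (rule conjunct1)
  have I2: "\<forall>j. Suc j < n \<longrightarrow> l j < l (Suc j)" using I'[THEN conjunct2, THEN conjunct1] .
  have I3: "\<forall>j<n. ys ! j \<in> Yspace x u \<and> dualnorm x u (ys ! j) = 1 \<and> (\<forall>i<l j. (ys ! j) i = 0)"
    using I'[THEN conjunct2, THEN conjunct2, THEN conjunct1] .
  have I4: "\<forall>j. Suc j < n \<longrightarrow> bdd_above (dual_set x u (tail (l (Suc j)) (ys ! j))) \<and>
        dualnorm x u (tail (l (Suc j)) (ys ! j)) \<le> \<delta>"
    using I'[THEN conjunct2, THEN conjunct2, THEN conjunct2] .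
  obtain m' where m'1: "n = 0 \<Longrightarrow> m' = K"
    and m'2: "n > 0 \<Longrightarrow> l (n - 1) < m' \<and> bdd_above (dual_set x u (tail m' (ys ! (n - 1)))) \<and>
        dualnorm x u (tail m' (ys ! (n - 1))) \<le> \<delta>"
  proof (cases "n = 0")
    case True show ?thesis by (rule that[of K]) (use True in auto)
  next
    case False
    define yl where "yl = ys ! (n - 1)"
    have ylY: "yl \<in> Yspace x u" using I3 False unfolding yl_def by simp
    have "\<forall>\<epsilon>>0. \<exists>c m. (\<forall>i\<ge>m. c i = 0) \<and> bdd_above (dual_set x u (\<lambda>i. yl i - c i)) \<and> dualnorm x u (\<lambda>i. yl i - c i) < \<epsilon>"
      using ylY unfolding Yspace_def by simp
    from this[rule_format, of "\<delta> / 2"] \<delta> obtain c M where c: "\<forall>i\<ge>M. c i = 0"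
      "bdd_above (dual_set x u (\<lambda>i. yl i - c i))" "dualnorm x u (\<lambda>i. yl i - c i) < \<delta> / 2" by auto
    define mm where "mm = max M (l (n - 1) + 1)"
    have teq: "tail mm yl = tail mm (\<lambda>i. yl i - c i)" unfolding tail_def mm_def using c(1) by (auto simp: fun_eq_iff)
    have T: "bdd_above (dual_set x u (tail mm (\<lambda>i. yl i - c i))) \<and> dualnorm x u (tail mm (\<lambda>i. yl i - c i)) \<le> 2 * dualnorm x u (\<lambda>i. yl i - c i)"
      by (rule tail_bdd[OF nx nu unc c(2)])
    have "l (n - 1) < mm" unfolding mm_def by simp
    then show ?thesis using that[of mm] False T teq c(3) unfolding yl_def by auto
  qed
  show ?thesis
  proof (intro exI[of _ m'] conjI ballI impI)
    show "closed_fincodim (Yspace x u) (dualnorm x u) (Wsub x u m')" by (rule W_closed_fincodim[OF nx nu])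
  next
    fix y assume yW: "y \<in> Wsub x u m'" and ny: "dualnorm x u y = 1"
    define l' where "l' = l(n := m')"
    have len': "length (ys @ [y]) = Suc n" unfolding n_def by simp
    have nth': "(ys @ [y]) ! j = (if j < n then ys ! j else y)" if "j < Suc n" for j
      using that unfolding n_def by (auto simp: nth_append)
    have J1: "K \<le> l' 0" unfolding l'_def using I1 m'1 by (cases "n = 0") auto
    have J2: "\<forall>j. Suc j < Suc n \<longrightarrow> l' j < l' (Suc j)"
    proof (intro allI impI)
      fix j assume j: "Suc j < Suc n"
      show "l' j < l' (Suc j)"
      proof (cases "Suc j < n")
        case True then show ?thesis unfolding l'_def using I2 by auto
      next
        case False
        then have "Suc j = n" using j by simp
        then show ?thesis unfolding l'_def using m'2[of] by auto
      qed
    qed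
    have J3: "\<forall>j<Suc n. (ys @ [y]) ! j \<in> Yspace x u \<and> dualnorm x u ((ys @ [y]) ! j) = 1 \<and> (\<forall>i<l' j. ((ys @ [y]) ! j) i = 0)"
    proof (intro allI impI)
      fix j assume j: "j < Suc n"
      show "(ys @ [y]) ! j \<in> Yspace x u \<and> dualnorm x u ((ys @ [y]) ! j) = 1 \<and> (\<forall>i<l' j. ((ys @ [y]) ! j) i = 0)"
      proof (cases "j < n")
        case True then show ?thesis using I3 nth'[OF j] unfolding l'_def by auto
      next
        case False
        then have "j = n" using j by simp
        then show ?thesis using nth'[OF j] yW ny unfolding l'_def Wsub_def by auto
      qed
    qed
    have J4: "\<forall>j. Suc j < Suc n \<longrightarrow> bdd_above (dual_set x u (tail (l' (Suc j)) ((ys @ [y]) ! j))) \<and>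
        dualnorm x u (tail (l' (Suc j)) ((ys @ [y]) ! j)) \<le> \<delta>"
    proof (intro allI impI)
      fix j assume j: "Suc j < Suc n"
      have jn: "j < n" using j by simp
      show "bdd_above (dual_set x u (tail (l' (Suc j)) ((ys @ [y]) ! j))) \<and>
        dualnorm x u (tail (l' (Suc j)) ((ys @ [y]) ! j)) \<le> \<delta>"
      proof (cases "Suc j < n")
        case True then show ?thesis using I4 nth'[of j] jn unfolding l'_def by auto
      next
        case False
        then have "Suc j = n" "j = n - 1" using j by auto
        then show ?thesis using m'2 nth'[of j] jn unfolding l'_def by auto
      qed
    qed
    show "Inv x u K \<delta> (ys @ [y]) (l(length ys := m'))"
      unfolding Inv_def len' l'_def[symmetric] n_def[symmetric] using J1 J2 J3 J4 by blast
  qed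
qed

lemma final:
  assumes T: "Tprop u CT" and CT: "0 < CT" and I: "Inv x u K \<delta> ys l" and len: "length ys = K"
    and K1: "1 \<le> K" and \<delta>0: "0 \<le> \<delta>"
  shows "dualnorm x u (\<lambda>i. \<Sum>j<K. a j * (ys ! j) i) \<le> (2 * CT + real K * \<delta>) * (MAX j\<in>{..<K}. \<bar>a j\<bar>)"
proof -
  have I': "K \<le> l 0 \<and> (\<forall>j. Suc j < K \<longrightarrow> l j < l (Suc j)) \<and>
    (\<forall>j<K. ys ! j \<in> Yspace x u \<and> dualnorm x u (ys ! j) = 1 \<and> (\<forall>i<l j. (ys ! j) i = 0)) \<and>
    (\<forall>j. Suc j < K \<longrightarrow> bdd_above (dual_set x u (tail (l (Suc j)) (ys ! j))) \<and>
        dualnorm x u (tail (l (Suc j)) (ys ! j)) \<le> \<delta>)"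
    using I unfolding Inv_def len .
  have I1: "K \<le> l 0" using I' by (rule conjunct1)
  have I2: "\<forall>j. Suc j < K \<longrightarrow> l j < l (Suc j)" using I'[THEN conjunct2, THEN conjunct1] .
  have I3: "\<forall>j<K. ys ! j \<in> Yspace x u \<and> dualnorm x u (ys ! j) = 1 \<and> (\<forall>i<l j. (ys ! j) i = 0)"
    using I'[THEN conjunct2, THEN conjunct2, THEN conjunct1] .
  have I4: "\<forall>j. Suc j < K \<longrightarrow> bdd_above (dual_set x u (tail (l (Suc j)) (ys ! j))) \<and>
        dualnorm x u (tail (l (Suc j)) (ys ! j)) \<le> \<delta>"
    using I'[THEN conjunct2, THEN conjunct2, THEN conjunct2] .
  define M where "M = (MAX j\<in>{..<K}. \<bar>a j\<bar>)"
  have aM: "\<bar>a j\<bar> \<le> M" if "j < K" for j unfolding M_def using that by (intro Max_ge) auto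
  have M0: "0 \<le> M" using aM[of 0] K1 by linarith
  show ?thesis unfolding M_def[symmetric]
  proof (rule dualnorm_le[OF nx nu])
    fix s assume "s \<in> dual_set x u (\<lambda>i. \<Sum>j<K. a j * (ys ! j) i)"
    then obtain z n where z: "\<forall>i\<ge>n. z i = 0" "Znorm x u z \<le> 1"
      "s = \<bar>\<Sum>i<n. z i * (\<Sum>j<K. a j * (ys ! j) i)\<bar>" by (rule dual_elem[OF nx nu])
    have Z0: "0 \<le> Znorm x u z" by (rule Znorm_nonneg[OF nx nu z(1)])
    define e where "e j = (if j < K then l j else l (K - 1) + n + 1 + j)" for j
    have e: "\<forall>j<K. e j < e (Suc j)"
    proof (intro allI impI)
      fix j assume j: "j < K"
      show "e j < e (Suc j)"
      proof (cases "Suc j < K")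
        case True then show ?thesis using I2 j unfolding e_def by simp
      next
        case False then have "j = K - 1" using j by simp
        then show ?thesis using j unfolding e_def by simp
      qed
    qed
    have Ke: "K \<le> e 0" using I1 K1 unfolding e_def by simp
    have eK: "n \<le> e K" unfolding e_def by simp
    have KLb: "(\<Sum>j<K. Znorm x u (rest (e j) (e (Suc j)) z)) \<le> 2 * CT * Znorm x u z"
      by (rule KL[OF nx nu sb unc T CT e Ke z(1)])
    define Tj where "Tj j = (\<Sum>i<n. z i * (ys ! j) i)" for j
    have Tb: "\<bar>Tj j\<bar> \<le> Znorm x u (rest (e j) (e (Suc j)) z) + \<delta>" if j: "j < K" for j
    proof -
      define y where "y = ys ! j"
      have yY: "y \<in> Yspace x u" and ny: "dualnorm x u y = 1" and yv: "\<forall>i<e j. y i = 0"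
        using I3 j unfolding y_def e_def by auto
      have ej: "e j < e (Suc j)" using e j by blast
      have split: "z i * y i = rest (e j) (e (Suc j)) z i * y i + z i * tail (e (Suc j)) y i" for i
        unfolding rest_def tail_def using yv ej by auto
      have "Tj j = (\<Sum>i<n. rest (e j) (e (Suc j)) z i * y i) + (\<Sum>i<n. z i * tail (e (Suc j)) y i)"
        unfolding Tj_def y_def[symmetric] split by (simp add: sum.distrib)
      moreover have "\<bar>\<Sum>i<n. rest (e j) (e (Suc j)) z i * y i\<bar> \<le> Znorm x u (rest (e j) (e (Suc j)) z)"
      proof -
        have fsr: "\<forall>i\<ge>n. rest (e j) (e (Suc j)) z i = 0" using z(1) unfolding rest_def by simp
        from pair_le[OF nx nu Y_bdd[OF nx nu yY] fsr] ny show ?thesis by simp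
      qed
      moreover have "\<bar>\<Sum>i<n. z i * tail (e (Suc j)) y i\<bar> \<le> \<delta>"
      proof (cases "Suc j < K")
        case True
        then have te: "e (Suc j) = l (Suc j)" unfolding e_def by simp
        have tb: "bdd_above (dual_set x u (tail (l (Suc j)) y))" "dualnorm x u (tail (l (Suc j)) y) \<le> \<delta>"
          using I4 True unfolding y_def by auto
        have "\<bar>\<Sum>i<n. z i * tail (e (Suc j)) y i\<bar> \<le> dualnorm x u (tail (l (Suc j)) y) * Znorm x u z"
          unfolding te by (rule pair_le[OF nx nu tb(1) z(1)])
        also have "\<dots> \<le> dualnorm x u (tail (l (Suc j)) y) * 1"
          by (rule mult_left_mono[OF z(2) dualnorm_nonneg[OF nx nu tb(1)]])
        finally show ?thesis using tb(2) by simp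
      next
        case False
        then have "Suc j = K" using j by simp
        then have "(\<Sum>i<n. z i * tail (e (Suc j)) y i) = 0"
          using eK unfolding tail_def by (intro sum.neutral) auto
        then show ?thesis using \<delta>0 by simp
      qed
      ultimately show ?thesis by (smt (verit) abs_triangle_ineq)
    qed
    have "(\<Sum>i<n. z i * (\<Sum>j<K. a j * (ys ! j) i)) = (\<Sum>j<K. a j * Tj j)"
    proof -
      have "(\<Sum>i<n. z i * (\<Sum>j<K. a j * (ys ! j) i)) = (\<Sum>i<n. \<Sum>j<K. a j * (z i * (ys ! j) i))"
        by (simp add: sum_distrib_left algebra_simps)
      also have "\<dots> = (\<Sum>j<K. \<Sum>i<n. a j * (z i * (ys ! j) i))" by (rule sum.swap)
      also have "\<dots> = (\<Sum>j<K. a j * Tj j)" unfolding Tj_def by (simp add: sum_distrib_left)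
      finally show ?thesis .
    qed
    then have "s = \<bar>\<Sum>j<K. a j * Tj j\<bar>" using z(3) by simp
    also have "\<dots> \<le> (\<Sum>j<K. \<bar>a j * Tj j\<bar>)" by (rule sum_abs)
    also have "\<dots> \<le> (\<Sum>j<K. M * (Znorm x u (rest (e j) (e (Suc j)) z) + \<delta>))"
    proof (rule sum_mono)
      fix j assume "j \<in> {..<K}"
      then have j: "j < K" by simp
      have "\<bar>a j * Tj j\<bar> = \<bar>a j\<bar> * \<bar>Tj j\<bar>" by (simp add: abs_mult)
      also have "\<dots> \<le> M * (Znorm x u (rest (e j) (e (Suc j)) z) + \<delta>)"
        by (rule mult_mono[OF aM[OF j] Tb[OF j] M0]) simp
      finally show "\<bar>a j * Tj j\<bar> \<le> M * (Znorm x u (rest (e j) (e (Suc j)) z) + \<delta>)" .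
    qed
    also have "\<dots> = M * ((\<Sum>j<K. Znorm x u (rest (e j) (e (Suc j)) z)) + real K * \<delta>)"
      by (simp add: sum_distrib_left[symmetric] sum.distrib)
    also have "\<dots> \<le> M * (2 * CT + real K * \<delta>)"
    proof (rule mult_left_mono[OF _ M0])
      have "2 * CT * Znorm x u z \<le> 2 * CT * 1" using z(2) CT by (intro mult_left_mono) auto
      then show "(\<Sum>j<K. Znorm x u (rest (e j) (e (Suc j)) z)) + real K * \<delta> \<le> 2 * CT + real K * \<delta>"
        using KLb by linarith
    qed
    finally show "s \<le> (2 * CT + real K * \<delta>) * M" by (simp add: mult.commute)
  qed
qed

lemma game:
  assumes T: "Tprop u CT" and CT: "0 < CT" and K1: "1 \<le> K"
  shows "length ys + r = K \<Longrightarrow> Inv x u K (1 / real K) ys l \<Longrightarrow>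
    asym_game (Yspace x u) (dualnorm x u) (2 * CT + 1) r ys"
proof (induction r arbitrary: ys l)
  case 0
  then have len: "length ys = K" by simp
  have d0: "0 \<le> 1 / real K" by simp
  have Kd: "real K * (1 / real K) = 1" using K1 by simp
  have "\<forall>a. dualnorm x u (\<lambda>i. \<Sum>j<K. a j * (ys ! j) i) \<le> (2 * CT + 1) * (MAX j\<in>{..<K}. \<bar>a j\<bar>)"
    using final[OF T CT "0.prems"(2) len K1 d0] unfolding Kd by blast
  then show ?case unfolding asym_game.simps len .
next
  case (Suc r)
  have lt: "length ys < K" using Suc.prems(1) by simp
  have d: "0 < 1 / real K" using K1 by simp
  obtain m' where m': "closed_fincodim (Yspace x u) (dualnorm x u) (Wsub x u m')"
    "\<forall>y\<in>Wsub x u m'. dualnorm x u y = 1 \<longrightarrow> Inv x u K (1 / real K) (ys @ [y]) (l(length ys := m'))"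
    using step[OF Suc.prems(2) lt d] by blast
  have "\<forall>y\<in>Wsub x u m'. dualnorm x u y = 1 \<longrightarrow> asym_game (Yspace x u) (dualnorm x u) (2 * CT + 1) r (ys @ [y])"
  proof (intro ballI impI)
    fix y assume "y \<in> Wsub x u m'" "dualnorm x u y = 1"
    then have "Inv x u K (1 / real K) (ys @ [y]) (l(length ys := m'))" using m'(2) by blast
    moreover have "length (ys @ [y]) + r = K" using Suc.prems(1) by simp
    ultimately show "asym_game (Yspace x u) (dualnorm x u) (2 * CT + 1) r (ys @ [y])"
      using Suc.IH by blast
  qed
  then show ?case using m'(1) by auto
qed

end



theorem propositionA7:
  fixes x :: "nat \<Rightarrow> 'a::banach" and u :: "nat \<Rightarrow> 'b::banach"
  assumes "\<forall>n. norm (x n) = 1"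
    and "sphere 0 1 \<subseteq> closure (range x \<union> range (\<lambda>n. - x n))"
    and "schauder_basis u" and "\<forall>n. norm (u n) = 1"
    and "unconditional1 u" and "boundedly_complete u"
    and "tsirelson u"
  shows "asymptotic_c0 (Yspace x u) (dualnorm x u)"
proof -
  obtain CT where CT: "0 < CT" "Tprop u CT" using assms(7) unfolding tsirelson_Tprop by blast
  have "\<forall>k\<ge>1. asym_game (Yspace x u) (dualnorm x u) (2 * CT + 1) k []"
  proof (intro allI impI)
    fix k :: nat assume k: "1 \<le> k"
    have I: "Inv x u k (1 / real k) [] (\<lambda>_. k)" unfolding Inv_def by simp
    show "asym_game (Yspace x u) (dualnorm x u) (2 * CT + 1) k []"
      using game[OF assms(1) assms(4) assms(3) assms(5) CT(2) CT(1) k, of "[]" k "\<lambda>_. k"] I by simp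
  qed
  moreover have "1 \<le> 2 * CT + 1" using CT by simp
  ultimately show ?thesis unfolding asymptotic_c0_def by blast
qed

end
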